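(* Let $x_0\in W^2_\infty(0,1)$ be positive with $x_0(0)>0$, let $F'(x_0)$ be the operator $[F'(x_0)h](s)=2\int_0^s x_0(s-t)h(t)\,dt$, let $\sigma>0$ and $m\in\mathbb{N}$ with $m\ge\sigma$, and let $Q_m$, $Q_m^\sigma$ be as follows: $[Q_mx](s)=m\int_{\Delta_i}x(t)\,dt$ and $[Q_m^\sigma x](s)=e^{\sigma s}m\int_{\Delta_i}e^{-\sigma t}x(t)\,dt$ for $s\in\Delta_i=[(i-1)/m,i/m)$. Suppose $Q_m^\sigma F'(x_0)Q_m^\sigma$ is accretive with respect to $\langle\cdot,\cdot\rangle_\sigma$. Then $Q_mF'(x_0)Q_m+\frac{8\sigma\|x_0\|_0}{m}\mathrm{Id}$ is accretive with respect to $\langle\cdot,\cdot\rangle_\sigma$. Consequently, for every $\alpha\ge\frac{16\sigma\|x_0\|_0}{m}$, $$\|(\alpha\mathrm{Id}+Q_mF'(x_0)Q_m)^{-1}\|_{\sigma\to\sigma}\le\frac2\alpha\quad\text{and}\quad\|(\alpha\mathrm{Id}+Q_mF'(x_0)Q_m)^{-1}Q_mF'(x_0)Q_m\|_{\sigma\to\sigma}\le2.$$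
   Context: $\langle x,y\rangle_\sigma=\int_0^1e^{-2\sigma t}x(t)y(t)\,dt$, $\|\cdot\|_\sigma$ the induced norm, $\|\cdot\|_0$ the usual $L_2(0,1)$ norm, and $\|A\|_{\sigma\to\sigma}$ the induced operator norm. A linear operator $A$ is accretive w.r.t. $\langle\cdot,\cdot\rangle_\sigma$ if $\langle Av,v\rangle_\sigma\ge0$ for all $v\in L_2(0,1)$. *)

theory Defs
  imports "HOL-Analysis.Analysis"
begin

text \<open>Functions on (0,1) are represented as total functions real => real;
  only their values on [0,1] matter.\<close>

definition L2 :: "(real \<Rightarrow> real) \<Rightarrow> bool" where
  "L2 v \<longleftrightarrow> set_borel_measurable lborel {0..1} v
      \<and> set_integrable lborel {0..1} (\<lambda>t. (v t)^2)"

definition inner_sigma :: "real \<Rightarrow> (real \<Rightarrow> real) \<Rightarrow> (real \<Rightarrow> real) \<Rightarrow> real" where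
  "inner_sigma \<sigma> x y = (LBINT t:{0..1}. exp (- 2 * \<sigma> * t) * x t * y t)"

definition norm_sigma :: "real \<Rightarrow> (real \<Rightarrow> real) \<Rightarrow> real" where
  "norm_sigma \<sigma> x = sqrt (inner_sigma \<sigma> x x)"

definition norm0 :: "(real \<Rightarrow> real) \<Rightarrow> real" where
  "norm0 x = sqrt (LBINT t:{0..1}. (x t)^2)"

definition W2inf :: "(real \<Rightarrow> real) \<Rightarrow> bool" where
  "W2inf x \<longleftrightarrow> (\<exists>d L. (\<forall>t\<in>{0..1}. (x has_real_derivative d t) (at t within {0..1}))
      \<and> (\<forall>s\<in>{0..1}. \<forall>t\<in>{0..1}. \<bar>d s - d t\<bar> \<le> L * \<bar>s - t\<bar>))"

text \<open>Cell Delta_i = [(i-1)/m, i/m) containing s; the point s = 1 is assigned to the last cell.\<close>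
definition cell :: "nat \<Rightarrow> real \<Rightarrow> real set" where
  "cell m s = (let k = min (m - 1) (nat \<lfloor>real m * s\<rfloor>) in {real k / real m ..< real (k+1) / real m})"

definition Qm :: "nat \<Rightarrow> (real \<Rightarrow> real) \<Rightarrow> real \<Rightarrow> real" where
  "Qm m x s = real m * (LBINT t:cell m s. x t)"

definition Qms :: "real \<Rightarrow> nat \<Rightarrow> (real \<Rightarrow> real) \<Rightarrow> real \<Rightarrow> real" where
  "Qms \<sigma> m x s = exp (\<sigma> * s) * real m * (LBINT t:cell m s. exp (- \<sigma> * t) * x t)"

definition Fderiv :: "(real \<Rightarrow> real) \<Rightarrow> (real \<Rightarrow> real) \<Rightarrow> real \<Rightarrow> real" where
  "Fderiv x0 h s = 2 * (LBINT t:{0..s}. x0 (s - t) * h t)"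

definition accretive :: "real \<Rightarrow> ((real \<Rightarrow> real) \<Rightarrow> (real \<Rightarrow> real)) \<Rightarrow> bool" where
  "accretive \<sigma> A \<longleftrightarrow> (\<forall>v. L2 v \<longrightarrow> inner_sigma \<sigma> (A v) v \<ge> 0)"

definition ae_eq01 :: "(real \<Rightarrow> real) \<Rightarrow> (real \<Rightarrow> real) \<Rightarrow> bool" where
  "ae_eq01 f g \<longleftrightarrow> (AE t in lborel. t \<in> {0..1} \<longrightarrow> f t = g t)"

end

theory Submission
  imports Defs
begin
definition idx :: "nat \<Rightarrow> real \<Rightarrow> nat" where
  "idx m s = min (m - 1) (nat \<lfloor>real m * s\<rfloor>)"

definition Dl :: "nat \<Rightarrow> nat \<Rightarrow> real set" where
  "Dl m j = {real j / real m ..< real (j+1) / real m}"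

lemma cell_eq: "cell m s = Dl m (idx m s)"
  by (simp add: cell_def idx_def Dl_def Let_def)

lemma idx_meas[measurable]: "idx m \<in> measurable borel (count_space UNIV)"
  unfolding idx_def by measurable

lemma step_meas[measurable]: "(\<lambda>t. (g::nat\<Rightarrow>real) (idx m t)) \<in> borel_measurable borel"
  by (rule measurable_compose[OF idx_meas]) simp

lemma S_sets[measurable]: "{t. idx m t = j} \<in> sets borel"
  by measurable

lemma idx_lt: "m \<ge> 1 \<Longrightarrow> idx m t < m"
  unfolding idx_def by linarith

lemma idx_char:
  assumes m: "m \<ge> 1" and t: "0 \<le> t" "t \<le> 1"
  shows "idx m t = j \<longleftrightarrow> (j < m \<and> real j / real m \<le> t \<and> (t < real (j+1) / real m \<or> j = m - 1))"
proof -
  have mp: "real m > 0" using m by simp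
  have le: "real j / real m \<le> t \<longleftrightarrow> real j \<le> real m * t" using mp by (simp add: field_simps)
  have lt: "t < real (j+1) / real m \<longleftrightarrow> real m * t < real j + 1" using mp by (simp add: field_simps)
  have fl0: "\<lfloor>real m * t\<rfloor> \<ge> 0" using t mp by simp
  show ?thesis
    unfolding idx_def le lt
    using fl0 m
    by (auto simp: min_def nat_le_iff le_nat_iff floor_less_iff le_floor_iff split: if_splits)
     (linarith | (smt (verit) floor_le_iff le_floor_iff of_int_of_nat_eq of_nat_1 of_nat_add of_nat_diff))+
qed

lemma antideriv:
  fixes g :: "real \<Rightarrow> real" assumes "continuous_on UNIV g"
  shows "\<exists>G. \<forall>x. (G has_real_derivative g x) (at x)"
proof -
  have "\<exists>F. \<forall>x :: real. -\<infinity> < x \<longrightarrow> x < \<infinity> \<longrightarrow> (F has_vector_derivative g x) (at x)"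
    by (rule einterval_antiderivative) (use assms in \<open>auto simp: continuous_on_eq_continuous_at\<close>)
  then show ?thesis by (auto simp: has_real_derivative_iff_has_vector_derivative)
qed

lemma FTC_Icc:
  fixes g G :: "real \<Rightarrow> real"
  assumes "\<And>x. (G has_real_derivative g x) (at x)" "continuous_on UNIV g" "a \<le> b"
  shows "(LBINT t:{a..b}. g t) = G b - G a"
  unfolding set_lebesgue_integral_def
  by (rule integral_FTC_atLeastAtMost[OF assms(3)])
     (use assms in \<open>auto simp: has_real_derivative_iff_has_vector_derivative[symmetric]
        intro: has_field_derivative_at_within continuous_on_subset\<close>)

lemma Ico_Icc_int:
  fixes f :: "real \<Rightarrow> real"
  shows "(LBINT t:{a..<b}. f t) = (LBINT t:{a..b}. f t)"
  by (rule set_integral_discrete_difference[where X="{b}"]) auto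

lemma FTC_Ico:
  fixes g G :: "real \<Rightarrow> real"
  assumes "\<And>x. (G has_real_derivative g x) (at x)" "continuous_on UNIV g" "a \<le> b"
  shows "(LBINT t:{a..<b}. g t) = G b - G a"
  using FTC_Icc[OF assms] Ico_Icc_int by simp

lemma cont_int_Icc:
  fixes f :: "real \<Rightarrow> real"
  shows "continuous_on {a..b} f \<Longrightarrow> set_integrable lborel {a..b} f"
  by (rule borel_integrable_atLeastAtMost')

lemma cont_int_sub:
  fixes f :: "real \<Rightarrow> real"
  assumes "continuous_on {a..b} f" "A \<in> sets borel" "A \<subseteq> {a..b}"
  shows "set_integrable lborel A f"
  by (rule set_integrable_subset[OF cont_int_Icc[OF assms(1)]]) (use assms in auto)

lemma const_int_Icc: "a \<le> b \<Longrightarrow> (LBINT t:{a..b}. (c::real)) = c * (b - a)"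
proof -
  assume ab: "a \<le> b"
  have "(LBINT t:{a..b}. c) = (\<lambda>t. c * t) b - (\<lambda>t. c * t) a"
    by (rule FTC_Icc[OF _ _ ab]) (auto intro!: derivative_eq_intros)
  then show ?thesis by (simp add: algebra_simps)
qed

lemma const_int_Ico: "a \<le> b \<Longrightarrow> (LBINT t:{a..<b}. (c::real)) = c * (b - a)"
  using const_int_Icc Ico_Icc_int by metis

lemma set_integral_indicator_Int:
  fixes f :: "real \<Rightarrow> real"
  shows "(LBINT t:A. indicator B t * f t) = (LBINT t:A \<inter> B. f t)"
  unfolding set_lebesgue_integral_def
  by (rule Bochner_Integration.integral_cong) (auto split: split_indicator)

lemma set_integral_sum':
  fixes f :: "nat \<Rightarrow> real \<Rightarrow> real"
  assumes "\<And>i. i \<in> I \<Longrightarrow> set_integrable lborel A (f i)"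
  shows "(LBINT t:A. (\<Sum>i\<in>I. f i t)) = (\<Sum>i\<in>I. LBINT t:A. f i t)"
  using assms unfolding set_lebesgue_integral_def set_integrable_def
  by (simp add: sum_distrib_left Bochner_Integration.integral_sum)

lemma conv_cell:
  fixes g G :: "real \<Rightarrow> real"
  assumes m: "m \<ge> 1" and G: "\<And>x. (G has_real_derivative g x) (at x)" and gc: "continuous_on UNIV g"
    and r: "0 \<le> r" "r \<le> 1" and j: "j < m"
  shows "(LBINT t:{0..r} \<inter> {t. idx m t = j}. g (r - t))
     = (G (max (r - real j / real m) 0) - G 0) - (G (max (r - real (j+1) / real m) 0) - G 0)"
proof (cases "r < real j / real m")
  case True
  have "\<not> (t \<in> {0..r} \<and> idx m t = j)" for t
  proof
    assume t: "t \<in> {0..r} \<and> idx m t = j"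
    then have "real j / real m \<le> t" using idx_char[OF m, of t j] r by auto
    then show False using t True by auto
  qed
  then have "{0..r} \<inter> {t. idx m t = j} = {}" by blast
  moreover have "r - real (j+1) / real m < 0" using True m
    by (simp add: divide_simps)
  ultimately show ?thesis using True by (simp add: set_lebesgue_integral_def)
next
  case False
  have mp: "real m > 0" using m by simp
  define e where "e = min r (real (j+1) / real m)"
  have je: "real j / real m \<le> e" using False mp by (auto simp: e_def divide_simps)
  have jm1: "j = m - 1 \<Longrightarrow> real (j+1) / real m = 1" using m by auto
  have "(LBINT t:{0..r} \<inter> {t. idx m t = j}. g (r - t)) = (LBINT t:{real j / real m..e}. g (r - t))"
  proof (rule set_integral_discrete_difference[where X="{e}"])
    show "({0..r} \<inter> {t. idx m t = j} - {real j / real m..e}) \<union> ({real j / real m..e} - {0..r} \<inter> {t. idx m t = j}) \<subseteq> {e}"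
    proof -
      have 1: "t \<in> {real j / real m..e}" if t: "t \<in> {0..r} \<inter> {t. idx m t = j}" for t
      proof -
        have c: "j < m \<and> real j / real m \<le> t \<and> (t < real (j+1) / real m \<or> j = m - 1)"
          using idx_char[OF m, of t j] t r by auto
        then have "t \<le> real (j+1) / real m" using jm1 r t by auto
        then show ?thesis using t c by (auto simp: e_def)
      qed
      have 2: "t \<in> {0..r} \<inter> {t. idx m t = j} \<or> t = e" if t: "t \<in> {real j / real m..e}" for t
      proof (cases "t = e")
        case False
        then have "t < r" "t < real (j+1) / real m" using t by (auto simp: e_def)
        moreover have "0 \<le> t" using t mp by (smt (verit) atLeastAtMost_iff divide_nonneg_pos of_nat_0_le_iff)
        ultimately show ?thesis using idx_char[OF m, of t j] r j t by auto
      qed simp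
      show ?thesis using 1 2 by blast
    qed
  qed auto
  also have "\<dots> = (\<lambda>t. - G (r - t)) e - (\<lambda>t. - G (r - t)) (real j / real m)"
    by (rule FTC_Icc[OF _ _ je])
      (auto intro!: derivative_eq_intros G[THEN DERIV_chain2] continuous_on_compose2[OF gc] continuous_intros)
  also have "r - e = max (r - real (j+1) / real m) 0" by (auto simp: e_def)
  moreover have "max (r - real j / real m) 0 = r - real j / real m" using False by auto
  ultimately show ?thesis by simp
qed

definition Ph :: "(real \<Rightarrow> real) \<Rightarrow> nat \<Rightarrow> nat \<Rightarrow> real \<Rightarrow> real" where
  "Ph G m j r = (G (max (r - real j / real m) 0) - G 0) - (G (max (r - real (j+1) / real m) 0) - G 0)"

lemma set_integrable_indicator_Int:
  fixes f :: "real \<Rightarrow> real"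
  assumes "set_integrable lborel (A \<inter> B) f"
  shows "set_integrable lborel A (\<lambda>t. indicator B t * f t)"
  using assms unfolding set_integrable_def
  by (rule Bochner_Integration.integrable_cong[THEN iffD1, rotated 2]) (auto split: split_indicator)

lemma conv_step:
  fixes g G :: "real \<Rightarrow> real" and \<beta> :: "nat \<Rightarrow> real"
  assumes m: "m \<ge> 1" and G: "\<And>x. (G has_real_derivative g x) (at x)" and gc: "continuous_on UNIV g"
    and r: "0 \<le> r" "r \<le> 1"
  shows "(LBINT t:{0..r}. g (r - t) * \<beta> (idx m t)) = (\<Sum>j<m. \<beta> j * Ph G m j r)"
proof -
  have gc': "continuous_on {0..r} (\<lambda>t. g (r - t))"
    by (intro continuous_on_compose2[OF gc] continuous_intros) auto
  have eq: "g (r - t) * \<beta> (idx m t) = (\<Sum>j<m. \<beta> j * (indicator {t. idx m t = j} t * g (r - t)))" for t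
  proof -
    have "(\<Sum>j<m. \<beta> j * (indicator {t. idx m t = j} t * g (r - t)))
        = (\<Sum>j\<in>{idx m t}. \<beta> j * (indicator {t. idx m t = j} t * g (r - t)))"
      by (rule sum.mono_neutral_right) (use idx_lt[OF m] in auto)
    then show ?thesis by simp
  qed
  have "(LBINT t:{0..r}. g (r - t) * \<beta> (idx m t))
      = (LBINT t:{0..r}. (\<Sum>j<m. \<beta> j * (indicator {t. idx m t = j} t * g (r - t))))"
    by (simp only: eq)
  also have "\<dots> = (\<Sum>j<m. LBINT t:{0..r}. \<beta> j * (indicator {t. idx m t = j} t * g (r - t)))"
    by (rule set_integral_sum')
      (auto intro!: set_integrable_mult_right set_integrable_indicator_Int cont_int_sub[OF gc'])
  also have "\<dots> = (\<Sum>j<m. \<beta> j * Ph G m j r)"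
  proof (rule sum.cong[OF refl])
    fix j assume j: "j \<in> {..<m}"
    have "(LBINT t:{0..r}. \<beta> j * (indicator {t. idx m t = j} t * g (r - t)))
        = \<beta> j * (LBINT t:{0..r} \<inter> {t. idx m t = j}. g (r - t))"
      by (simp add: set_integral_indicator_Int)
    also have "\<dots> = \<beta> j * Ph G m j r"
      using conv_cell[OF m G gc r, of j] j by (simp add: Ph_def)
    finally show "(LBINT t:{0..r}. \<beta> j * (indicator {t. idx m t = j} t * g (r - t))) = \<beta> j * Ph G m j r" .
  qed
  finally show ?thesis .
qed

lemma Dl_sets[measurable]: "Dl m i \<in> sets borel"
  by (simp add: Dl_def)

lemma Dl_sub: "i < m \<Longrightarrow> Dl m i \<subseteq> {0..<1}"
  by (auto simp: Dl_def divide_simps)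

lemma split_cells:
  fixes f :: "real \<Rightarrow> real" and \<gamma> :: "nat \<Rightarrow> real"
  assumes m: "m \<ge> 1" and f: "set_integrable lborel {0..1} f"
  shows "(LBINT t:{0..1}. f t * \<gamma> (idx m t)) = (\<Sum>i<m. \<gamma> i * (LBINT t:Dl m i. f t))"
proof -
  have eq: "f t * \<gamma> (idx m t) = (\<Sum>j<m. \<gamma> j * (indicator {t. idx m t = j} t * f t))" for t
  proof -
    have "(\<Sum>j<m. \<gamma> j * (indicator {t. idx m t = j} t * f t))
        = (\<Sum>j\<in>{idx m t}. \<gamma> j * (indicator {t. idx m t = j} t * f t))"
      by (rule sum.mono_neutral_right) (use idx_lt[OF m] in auto)
    then show ?thesis by simp
  qed
  have "(LBINT t:{0..1}. f t * \<gamma> (idx m t))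
      = (LBINT t:{0..1}. (\<Sum>j<m. \<gamma> j * (indicator {t. idx m t = j} t * f t)))"
    by (simp only: eq)
  also have "\<dots> = (\<Sum>j<m. LBINT t:{0..1}. \<gamma> j * (indicator {t. idx m t = j} t * f t))"
    by (rule set_integral_sum')
      (auto intro!: set_integrable_mult_right set_integrable_indicator_Int set_integrable_subset[OF f])
  also have "\<dots> = (\<Sum>i<m. \<gamma> i * (LBINT t:Dl m i. f t))"
  proof (rule sum.cong[OF refl])
    fix j assume j: "j \<in> {..<m}"
    have "(LBINT t:{0..1} \<inter> {t. idx m t = j}. f t) = (LBINT t:Dl m j. f t)"
    proof (rule set_integral_discrete_difference[where X="{1}"])
      show "({0..1} \<inter> {t. idx m t = j} - Dl m j) \<union> (Dl m j - {0..1} \<inter> {t. idx m t = j}) \<subseteq> {1}"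
      proof -
        have 1: "t \<in> Dl m j \<or> t = 1" if t: "t \<in> {0..1} \<inter> {t. idx m t = j}" for t
          using idx_char[OF m, of t j] t m by (auto simp: Dl_def)
        have 2: "t \<in> {0..1} \<inter> {t. idx m t = j}" if t: "t \<in> Dl m j" for t
        proof -
          have "t \<in> {0..<1}" using Dl_sub[of j m] j t by auto
          then show ?thesis using idx_char[OF m, of t j] t j by (auto simp: Dl_def)
        qed
        show ?thesis using 1 2 by blast
      qed
    qed auto
    then show "(LBINT t:{0..1}. \<gamma> j * (indicator {t. idx m t = j} t * f t)) = \<gamma> j * (LBINT t:Dl m j. f t)"
      by (simp add: set_integral_indicator_Int)
  qed
  finally show ?thesis .
qed

lemma L2_meas: "L2 v \<Longrightarrow> set_borel_measurable lborel {0..1} v"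
  by (simp add: L2_def)

lemma L2_sq: "L2 v \<Longrightarrow> set_integrable lborel {0..1} (\<lambda>t. (v t)^2)"
  by (simp add: L2_def)

lemma sbm_times:
  fixes f v :: "real \<Rightarrow> real"
  assumes "f \<in> borel_measurable borel" "set_borel_measurable lborel A v"
  shows "set_borel_measurable lborel A (\<lambda>t. f t * v t)"
proof -
  have "(\<lambda>t. f t * (indicator A t *\<^sub>R v t)) \<in> borel_measurable lborel"
    using assms unfolding set_borel_measurable_def by (simp add: measurable_lborel1)
  then show ?thesis unfolding set_borel_measurable_def by (simp add: algebra_simps)
qed

lemma sbm_times2:
  fixes u v :: "real \<Rightarrow> real"
  assumes "set_borel_measurable lborel A u" "set_borel_measurable lborel A v"
  shows "set_borel_measurable lborel A (\<lambda>t. u t * v t)"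
proof -
  have "(\<lambda>t. (indicator A t *\<^sub>R u t) * (indicator A t *\<^sub>R v t)) \<in> borel_measurable lborel"
    using assms unfolding set_borel_measurable_def by simp
  moreover have "(\<lambda>t. (indicator A t *\<^sub>R u t) * (indicator A t *\<^sub>R v t)) = (\<lambda>t. indicator A t *\<^sub>R (u t * v t))"
    by (auto simp: fun_eq_iff split: split_indicator)
  ultimately show ?thesis unfolding set_borel_measurable_def by simp
qed

lemma L2_int:
  fixes f v :: "real \<Rightarrow> real"
  assumes v: "L2 v" and f: "f \<in> borel_measurable borel" and K: "\<And>t. t \<in> {0..1} \<Longrightarrow> \<bar>f t\<bar> \<le> K"
  shows "set_integrable lborel {0..1} (\<lambda>t. f t * v t)"
proof (rule set_integrable_bound[where f="\<lambda>t. K * (1 + (v t)^2)"])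
  show "set_integrable lborel {0..1} (\<lambda>t. K * (1 + (v t)^2))"
    using L2_sq[OF v] cont_int_Icc[of 0 1 "\<lambda>t. K"] by (auto simp: algebra_simps intro!: set_integral_add)
  show "set_borel_measurable lborel {0..1} (\<lambda>t. f t * v t)"
    by (rule sbm_times[OF f L2_meas[OF v]])
  show "AE t in lborel. t \<in> {0..1} \<longrightarrow> norm (f t * v t) \<le> norm (K * (1 + (v t)^2))"
  proof (intro AE_I2 impI)
    fix t :: real assume t: "t \<in> {0..1}"
    have K0: "0 \<le> K" using K[OF t] by linarith
    have a: "\<bar>v t\<bar> \<le> 1 + (v t)^2"
    proof -
      have "0 \<le> (\<bar>v t\<bar> - 1)^2" by simp
      then have "0 \<le> \<bar>v t\<bar>^2 - 2 * \<bar>v t\<bar> + 1" by (simp add: power2_diff)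
      then show ?thesis by (simp add: power2_abs)
    qed
    have "\<bar>f t * v t\<bar> \<le> K * \<bar>v t\<bar>" using K[OF t] by (simp add: abs_mult mult_right_mono)
    also have "\<dots> \<le> K * (1 + (v t)^2)" by (rule mult_left_mono[OF a K0])
    finally show "norm (f t * v t) \<le> norm (K * (1 + (v t)^2))" using K0 by simp
  qed
qed

lemma L2_int2:
  fixes f u v :: "real \<Rightarrow> real"
  assumes u: "L2 u" and v: "L2 v" and f: "f \<in> borel_measurable borel" and K: "\<And>t. t \<in> {0..1} \<Longrightarrow> \<bar>f t\<bar> \<le> K"
  shows "set_integrable lborel {0..1} (\<lambda>t. f t * u t * v t)"
proof (rule set_integrable_bound[where f="\<lambda>t. K * ((u t)^2 + (v t)^2)"])
  show "set_integrable lborel {0..1} (\<lambda>t. K * ((u t)^2 + (v t)^2))"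
    using L2_sq[OF v] L2_sq[OF u] by (auto simp: algebra_simps intro!: set_integral_add)
  show "set_borel_measurable lborel {0..1} (\<lambda>t. f t * u t * v t)"
    using sbm_times[OF f sbm_times2[OF L2_meas[OF u] L2_meas[OF v]]] by (simp add: mult.assoc)
  show "AE t in lborel. t \<in> {0..1} \<longrightarrow> norm (f t * u t * v t) \<le> norm (K * ((u t)^2 + (v t)^2))"
  proof (intro AE_I2 impI)
    fix t :: real assume t: "t \<in> {0..1}"
    have K0: "0 \<le> K" using K[of t] t by linarith
    have a: "\<bar>u t * v t\<bar> \<le> (u t)^2 + (v t)^2"
    proof -
      have "0 \<le> (\<bar>u t\<bar> - \<bar>v t\<bar>)^2" by simp
      then have "0 \<le> \<bar>u t\<bar>^2 - 2 * \<bar>u t\<bar> * \<bar>v t\<bar> + \<bar>v t\<bar>^2" by (simp add: power2_diff)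
      then have "2 * (\<bar>u t\<bar> * \<bar>v t\<bar>) \<le> (u t)^2 + (v t)^2" by (simp add: power2_abs)
      moreover have "0 \<le> \<bar>u t\<bar> * \<bar>v t\<bar>" by simp
      ultimately show ?thesis unfolding abs_mult by linarith
    qed
    have "\<bar>f t * u t * v t\<bar> \<le> K * \<bar>u t * v t\<bar>" using K[of t] t by (simp add: abs_mult mult_right_mono mult.assoc)
    also have "\<dots> \<le> K * ((u t)^2 + (v t)^2)" by (rule mult_left_mono[OF a K0])
    finally show "norm (f t * u t * v t) \<le> norm (K * ((u t)^2 + (v t)^2))" using K0 by simp
  qed
qed

locale ctx =
  fixes x0 :: "real \<Rightarrow> real" and \<sigma> :: real and m :: nat
  assumes cont: "continuous_on {0..1} x0"
    and pos: "\<And>t. t \<in> {0..1} \<Longrightarrow> x0 t > 0"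
    and sig: "\<sigma> > 0" and msig: "\<sigma> \<le> real m"
begin

lemma m1: "m \<ge> 1" using sig msig by (cases m) auto
lemma mpos: "real m > 0" using m1 by simp

definition x0c :: "real \<Rightarrow> real" where "x0c u = x0 (max 0 (min 1 u))"
definition gB :: "real \<Rightarrow> real" where "gB u = x0c u * exp (- \<sigma> * u)"

lemma x0c_cont: "continuous_on UNIV x0c"
  unfolding x0c_def
  by (rule continuous_on_compose2[OF cont]) (auto intro!: continuous_intros)

lemma gB_cont: "continuous_on UNIV gB"
  unfolding gB_def by (intro continuous_intros x0c_cont)

lemma x0c_pos: "x0c u > 0" unfolding x0c_def by (rule pos) auto

lemma x0c_eq: "t \<in> {0..1} \<Longrightarrow> x0c t = x0 t" unfolding x0c_def by auto

definition X :: "real \<Rightarrow> real" where "X = (SOME G. \<forall>x. (G has_real_derivative x0c x) (at x))"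
definition Z :: "real \<Rightarrow> real" where "Z = (SOME G. \<forall>x. (G has_real_derivative gB x) (at x))"

lemma X_deriv: "(X has_real_derivative x0c x) (at x)"
  using someI_ex[OF antideriv[OF x0c_cont]] unfolding X_def by blast
lemma Z_deriv: "(Z has_real_derivative gB x) (at x)"
  using someI_ex[OF antideriv[OF gB_cont]] unfolding Z_def by blast

lemma X_cont: "continuous_on UNIV X"
  using X_deriv by (meson DERIV_isCont continuous_at_imp_continuous_on)
lemma Z_cont: "continuous_on UNIV Z"
  using Z_deriv by (meson DERIV_isCont continuous_at_imp_continuous_on)

lemma Ph_cont:
  assumes "continuous_on UNIV G"
  shows "continuous_on UNIV (Ph G m j)"
  unfolding Ph_def
  by (intro continuous_intros continuous_on_compose2[OF assms]) auto

definition a :: "(real \<Rightarrow> real) \<Rightarrow> nat \<Rightarrow> real" where "a u j = (LBINT t:Dl m j. u t)"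
definition b :: "(real \<Rightarrow> real) \<Rightarrow> nat \<Rightarrow> real" where "b u j = (LBINT t:Dl m j. exp (- \<sigma> * t) * u t)"
definition kap :: "nat \<Rightarrow> nat \<Rightarrow> real" where "kap i j = (LBINT r:Dl m i. Ph X m j r)"
definition lam :: "nat \<Rightarrow> nat \<Rightarrow> real" where "lam i j = (LBINT r:Dl m i. Ph Z m j r)"

lemma Dl_int: fixes f :: "real \<Rightarrow> real"
  assumes "continuous_on UNIV f" shows "set_integrable lborel (Dl m i) f"
  by (rule cont_int_sub[where a="real i / real m" and b="real (i+1) / real m"])
     (auto intro: continuous_on_subset[OF assms] simp: Dl_def)

lemma Qm_step: "Qm m u t = real m * a u (idx m t)"
  by (simp add: Qm_def a_def cell_eq)

lemma Qms_step: "Qms \<sigma> m u t = exp (\<sigma> * t) * real m * b u (idx m t)"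
  by (simp add: Qms_def b_def cell_eq)

lemma F_Qm:
  assumes r: "0 \<le> r" "r \<le> 1"
  shows "Fderiv x0 (Qm m u) r = 2 * (\<Sum>j<m. (real m * a u j) * Ph X m j r)"
proof -
  have "(LBINT t:{0..r}. x0 (r - t) * Qm m u t) = (LBINT t:{0..r}. x0c (r - t) * (real m * a u (idx m t)))"
    by (rule set_lebesgue_integral_cong) (use r in \<open>auto simp: x0c_eq Qm_step\<close>)
  also have "\<dots> = (\<Sum>j<m. (real m * a u j) * Ph X m j r)"
    by (rule conv_step[OF m1 X_deriv x0c_cont r])
  finally show ?thesis by (simp add: Fderiv_def)
qed

lemma F_Qms:
  assumes r: "0 \<le> r" "r \<le> 1"
  shows "Fderiv x0 (Qms \<sigma> m u) r = 2 * exp (\<sigma> * r) * (\<Sum>j<m. (real m * b u j) * Ph Z m j r)"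
proof -
  have "(LBINT t:{0..r}. x0 (r - t) * Qms \<sigma> m u t)
      = (LBINT t:{0..r}. exp (\<sigma> * r) * (gB (r - t) * (real m * b u (idx m t))))"
  proof (rule set_lebesgue_integral_cong)
    show "\<forall>t. t \<in> {0..r} \<longrightarrow> x0 (r - t) * Qms \<sigma> m u t = exp (\<sigma> * r) * (gB (r - t) * (real m * b u (idx m t)))"
    proof (intro allI impI)
      fix t assume t: "t \<in> {0..r}"
      have "exp (\<sigma> * r) * exp (- \<sigma> * (r - t)) = exp (\<sigma> * t)"
        by (simp add: exp_add[symmetric] algebra_simps)
      then show "x0 (r - t) * Qms \<sigma> m u t = exp (\<sigma> * r) * (gB (r - t) * (real m * b u (idx m t)))"
        using t r by (simp add: gB_def x0c_eq Qms_step)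
    qed
  qed simp
  also have "\<dots> = exp (\<sigma> * r) * (\<Sum>j<m. (real m * b u j) * Ph Z m j r)"
    using conv_step[OF m1 Z_deriv gB_cont r] by simp
  finally show ?thesis by (simp add: Fderiv_def)
qed

lemma A_formula: "Qm m (Fderiv x0 (Qm m u)) s = 2 * real m ^ 2 * (\<Sum>j<m. a u j * kap (idx m s) j)"
proof -
  let ?i = "idx m s"
  have i: "?i < m" using idx_lt[OF m1] .
  have "(LBINT r:Dl m ?i. Fderiv x0 (Qm m u) r) = (LBINT r:Dl m ?i. 2 * (\<Sum>j<m. (real m * a u j) * Ph X m j r))"
    by (rule set_lebesgue_integral_cong) (use Dl_sub[OF i] in \<open>auto simp: F_Qm\<close>)
  also have "\<dots> = 2 * (\<Sum>j<m. (real m * a u j) * kap ?i j)"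
    by (simp add: set_integral_sum' Dl_int[OF Ph_cont[OF X_cont]] kap_def)
  finally show ?thesis
    by (simp add: Qm_def cell_eq power2_eq_square sum_distrib_left algebra_simps)
qed

lemma B_formula: "Qms \<sigma> m (Fderiv x0 (Qms \<sigma> m u)) s = exp (\<sigma> * s) * (2 * real m ^ 2 * (\<Sum>j<m. b u j * lam (idx m s) j))"
proof -
  let ?i = "idx m s"
  have i: "?i < m" using idx_lt[OF m1] .
  have "(LBINT r:Dl m ?i. exp (- \<sigma> * r) * Fderiv x0 (Qms \<sigma> m u) r)
       = (LBINT r:Dl m ?i. 2 * (\<Sum>j<m. (real m * b u j) * Ph Z m j r))"
  proof (rule set_lebesgue_integral_cong)
    show "\<forall>r. r \<in> Dl m ?i \<longrightarrow> exp (- \<sigma> * r) * Fderiv x0 (Qms \<sigma> m u) r = 2 * (\<Sum>j<m. (real m * b u j) * Ph Z m j r)"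
    proof (intro allI impI)
      fix r assume "r \<in> Dl m ?i"
      then have r: "0 \<le> r" "r \<le> 1" using Dl_sub[OF i] by auto
      have "exp (- \<sigma> * r) * exp (\<sigma> * r) = 1" by (simp add: exp_add[symmetric])
      then show "exp (- \<sigma> * r) * Fderiv x0 (Qms \<sigma> m u) r = 2 * (\<Sum>j<m. (real m * b u j) * Ph Z m j r)"
        by (simp add: F_Qms[OF r] algebra_simps)
    qed
  qed simp
  also have "\<dots> = 2 * (\<Sum>j<m. (real m * b u j) * lam ?i j)"
    by (simp add: set_integral_sum' Dl_int[OF Ph_cont[OF Z_cont]] lam_def)
  finally show ?thesis
    by (simp add: Qms_def cell_eq power2_eq_square sum_distrib_left algebra_simps)
qed

end

context ctx begin

lemma X_mono: "u \<le> w \<Longrightarrow> X u \<le> X w"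
  by (rule DERIV_nonneg_imp_nondecreasing) (use X_deriv x0c_pos in \<open>auto intro: less_imp_le\<close>)

definition Lc :: real where "Lc = X 1 - X 0"

definition Xh :: "real \<Rightarrow> real" where "Xh u = X (max u 0) - X 0"

lemma Ph_X: "Ph X m j r = Xh (r - real j / real m) - Xh (r - real (j+1) / real m)"
  by (simp add: Ph_def Xh_def)

lemma Xh_mono: "u \<le> w \<Longrightarrow> Xh u \<le> Xh w"
  unfolding Xh_def using X_mono[of "max u 0" "max w 0"] by auto

lemma Xh_nonneg: "Xh u \<ge> 0"
  unfolding Xh_def using X_mono[of 0 "max u 0"] by auto

lemma Xh_neg: "u \<le> 0 \<Longrightarrow> Xh u = 0"
  unfolding Xh_def by (simp add: max_def)

lemma Xh_le: "u \<le> 1 \<Longrightarrow> Xh u \<le> Lc"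
  unfolding Xh_def Lc_def using X_mono[of "max u 0" 1] by auto

lemma Xh_cont: "continuous_on UNIV Xh"
  unfolding Xh_def by (intro continuous_intros continuous_on_compose2[OF X_cont]) auto

lemma Ph_X_nonneg: "Ph X m j r \<ge> 0"
  unfolding Ph_X by (rule diff_ge_0_iff_ge[THEN iffD2], rule Xh_mono) (use mpos in \<open>simp add: divide_simps\<close>)

lemma Lc_nonneg: "Lc \<ge> 0" unfolding Lc_def using X_mono[of 0 1] by simp

lemma kap_nonneg: "kap i j \<ge> 0"
  unfolding kap_def set_lebesgue_integral_def
  by (rule Bochner_Integration.integral_nonneg) (auto simp: indicator_def intro: Ph_X_nonneg)

lemma Dl_mem: "r \<in> Dl m i \<Longrightarrow> real i / real m \<le> r \<and> r < real (i+1) / real m"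
  by (simp add: Dl_def)

lemma kap_upper: "i < j \<Longrightarrow> kap i j = 0"
proof -
  assume ij: "i < j"
  have "Ph X m j r = 0" if r: "r \<in> Dl m i" for r
  proof -
    have "real (i+1) \<le> real j" using ij by simp
    then have "real (i+1) / real m \<le> real j / real m" using mpos by (simp add: divide_right_mono)
    then have "r \<le> real j / real m" using Dl_mem[OF r] by simp
    moreover have "real j / real m \<le> real (j+1) / real m" using mpos by (simp add: divide_right_mono)
    ultimately show ?thesis unfolding Ph_X by (simp add: Xh_neg)
  qed
  then have "kap i j = (LBINT r:Dl m i. 0)"
    unfolding kap_def by (intro set_lebesgue_integral_cong) auto
  then show ?thesis by simp
qed

lemma Dl_measure_int: "i < m \<Longrightarrow> (LBINT r:Dl m i. (c::real)) = c / real m"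
proof -
  assume i: "i < m"
  have "real i / real m \<le> real (i+1) / real m" using mpos by (simp add: divide_right_mono)
  then have "(LBINT r:Dl m i. c) = c * (real (i+1) / real m - real i / real m)"
    unfolding Dl_def by (rule const_int_Ico)
  then show ?thesis by (simp add: diff_divide_distrib[symmetric])
qed

lemma row_sum: "i < m \<Longrightarrow> (\<Sum>j<m. kap i j) \<le> Lc / real m"
proof -
  assume i: "i < m"
  have "(\<Sum>j<m. kap i j) = (LBINT r:Dl m i. (\<Sum>j<m. Ph X m j r))"
    unfolding kap_def by (rule set_integral_sum'[symmetric]) (rule Dl_int[OF Ph_cont[OF X_cont]])
  also have "\<dots> = (LBINT r:Dl m i. Xh r)"
  proof (rule set_lebesgue_integral_cong)
    show "\<forall>r. r \<in> Dl m i \<longrightarrow> (\<Sum>j<m. Ph X m j r) = Xh r"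
    proof (intro allI impI)
      fix r assume r: "r \<in> Dl m i"
      have "(\<Sum>j<m. Ph X m j r) = (\<Sum>j<m. (\<lambda>j. Xh (r - real j / real m)) j - (\<lambda>j. Xh (r - real j / real m)) (Suc j))"
        unfolding Ph_X by simp
      also have "\<dots> = Xh r - Xh (r - 1)" using mpos by (subst sum_lessThan_telescope') simp
      also have "Xh (r - 1) = 0" using Dl_sub[OF i] r by (intro Xh_neg) auto
      finally show "(\<Sum>j<m. Ph X m j r) = Xh r" by simp
    qed
  qed simp
  also have "\<dots> \<le> (LBINT r:Dl m i. Lc)"
    by (rule set_integral_mono) (use Dl_sub[OF i] in \<open>auto intro!: Dl_int Xh_cont Xh_le\<close>)
  also have "\<dots> = Lc / real m" by (rule Dl_measure_int[OF i])
  finally show ?thesis .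
qed

definition Yh :: "real \<Rightarrow> real" where "Yh = (SOME G. \<forall>x. (G has_real_derivative Xh x) (at x))"
lemma Yh_deriv: "(Yh has_real_derivative Xh x) (at x)"
  using someI_ex[OF antideriv[OF Xh_cont]] unfolding Yh_def by blast

lemma Xh_shift_int: "(LBINT r:{0..1}. Xh (r - c)) = Yh (1 - c) - Yh (- c)"
proof -
  have d: "((\<lambda>r. Yh (r - c)) has_real_derivative Xh (x - c)) (at x)" for x
  proof -
    have "((\<lambda>r. r - c) has_real_derivative 1) (at x)" by (auto intro!: derivative_eq_intros)
    from DERIV_chain2[OF Yh_deriv[of "x - c"] this] show ?thesis by simp
  qed
  have "(LBINT r:{0..1}. Xh (r - c)) = (\<lambda>r. Yh (r - c)) 1 - (\<lambda>r. Yh (r - c)) 0"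
    by (rule FTC_Icc[OF d]) (auto intro!: continuous_on_compose2[OF Xh_cont] continuous_intros)
  then show ?thesis by simp
qed

lemma Yh_diff_le: "p \<le> q \<Longrightarrow> q \<le> 1 \<Longrightarrow> Yh q - Yh p \<le> Lc * (q - p)"
proof -
  assume ab: "p \<le> q" "q \<le> 1"
  have "Yh q - Yh p = (LBINT r:{p..q}. Xh r)"
    by (rule FTC_Icc[symmetric]) (use ab Yh_deriv Xh_cont in auto)
  also have "\<dots> \<le> (LBINT r:{p..q}. Lc)"
    by (rule set_integral_mono) (use ab in \<open>auto intro!: cont_int_Icc continuous_on_subset[OF Xh_cont] Xh_le\<close>)
  also have "\<dots> = Lc * (q - p)" by (rule const_int_Icc[OF ab(1)])
  finally show ?thesis .
qed

lemma Yh_diff_neg: "p \<le> q \<Longrightarrow> q \<le> 0 \<Longrightarrow> Yh q - Yh p = 0"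
proof -
  assume ab: "p \<le> q" "q \<le> 0"
  have "Yh q - Yh p = (LBINT r:{p..q}. Xh r)"
    by (rule FTC_Icc[symmetric]) (use ab Yh_deriv Xh_cont in auto)
  also have "\<dots> = (LBINT r:{p..q}. 0)"
    by (rule set_lebesgue_integral_cong) (use ab in \<open>auto intro!: Xh_neg\<close>)
  finally show ?thesis by simp
qed

lemma col_sum: "j < m \<Longrightarrow> (\<Sum>i<m. kap i j) \<le> Lc / real m"
proof -
  assume j: "j < m"
  have jm: "real (j+1) / real m \<le> 1" using j mpos by (simp add: divide_simps)
  have jj: "real j / real m \<le> real (j+1) / real m" using mpos by (simp add: divide_right_mono)
  have j0: "0 \<le> real j / real m" using mpos by simp
  have "(\<Sum>i<m. kap i j) = (\<Sum>i<m. 1 * (LBINT r:Dl m i. Ph X m j r))" by (simp add: kap_def)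
  also have "\<dots> = (LBINT r:{0..1}. Ph X m j r * 1)"
    by (rule split_cells[symmetric, OF m1]) (auto intro!: cont_int_Icc continuous_on_subset[OF Ph_cont[OF X_cont]])
  also have "\<dots> = (LBINT r:{0..1}. Xh (r - real j / real m) - Xh (r - real (j+1) / real m))"
    by (simp add: Ph_X)
  also have "\<dots> = (LBINT r:{0..1}. Xh (r - real j / real m)) - (LBINT r:{0..1}. Xh (r - real (j+1) / real m))"
    by (rule set_integral_diff) (auto intro!: cont_int_Icc continuous_on_compose2[OF Xh_cont] continuous_intros)
  also have "\<dots> = (Yh (1 - real j / real m) - Yh (1 - real (j+1) / real m))
       - (Yh (- (real j / real m)) - Yh (- (real (j+1) / real m)))"
    by (simp add: Xh_shift_int)
  also have "Yh (- (real j / real m)) - Yh (- (real (j+1) / real m)) = 0"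
    by (rule Yh_diff_neg) (use jj j0 in auto)
  also have "Yh (1 - real j / real m) - Yh (1 - real (j+1) / real m) \<le> Lc * ((1 - real j / real m) - (1 - real (j+1) / real m))"
    by (rule Yh_diff_le) (use jj j0 in auto)
  also have "(1 - real j / real m) - (1 - real (j+1) / real m) = 1 / real m"
    using mpos by (simp add: divide_simps)
  finally show ?thesis by simp
qed

end

lemma cont_bounded01:
  fixes w :: "real \<Rightarrow> real"
  assumes "continuous_on UNIV w"
  obtains K where "\<And>t. t \<in> {0..1} \<Longrightarrow> \<bar>w t\<bar> \<le> K"
proof -
  have "compact (w ` {0..1})"
    by (rule compact_continuous_image[OF continuous_on_subset[OF assms]]) auto
  then obtain K where "\<forall>x\<in>w ` {0..1}. norm x \<le> K" using compact_imp_bounded bounded_iff by metis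
  then show ?thesis using that[of K] by auto
qed

lemma L2_int_cont:
  fixes w v :: "real \<Rightarrow> real"
  assumes v: "L2 v" and w: "continuous_on UNIV w"
  shows "set_integrable lborel {0..1} (\<lambda>t. w t * v t)"
proof -
  obtain K where K: "\<And>t. t \<in> {0..1} \<Longrightarrow> \<bar>w t\<bar> \<le> K" using cont_bounded01[OF w] by blast
  have "w \<in> borel_measurable borel" using w by (simp add: borel_measurable_continuous_onI)
  then show ?thesis using L2_int[OF v, where f=w and K=K] K by blast
qed

lemma L2_int2_cont:
  fixes w u v :: "real \<Rightarrow> real"
  assumes u: "L2 u" and v: "L2 v" and w: "continuous_on UNIV w"
  shows "set_integrable lborel {0..1} (\<lambda>t. w t * u t * v t)"
proof -
  obtain K where K: "\<And>t. t \<in> {0..1} \<Longrightarrow> \<bar>w t\<bar> \<le> K" using cont_bounded01[OF w] by blast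
  have "w \<in> borel_measurable borel" using w by (simp add: borel_measurable_continuous_onI)
  then show ?thesis using L2_int2[OF u v, where f=w and K=K] K by blast
qed

context ctx begin

definition cc :: "(real \<Rightarrow> real) \<Rightarrow> nat \<Rightarrow> real" where "cc v i = (LBINT t:Dl m i. exp (- 2 * \<sigma> * t) * v t)"
definition T :: "(real \<Rightarrow> real) \<Rightarrow> nat \<Rightarrow> real" where "T v i = (LBINT t:Dl m i. exp (- \<sigma> * t) * \<bar>v t\<bar>)"
definition N :: "(real \<Rightarrow> real) \<Rightarrow> nat \<Rightarrow> real" where "N v i = (LBINT t:Dl m i. exp (- 2 * \<sigma> * t) * (v t)^2)"

lemma Dl_sub01: "i < m \<Longrightarrow> Dl m i \<subseteq> {0..1}"
proof -
  assume "i < m"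
  then have "Dl m i \<subseteq> {0..<1}" by (rule Dl_sub)
  moreover have "{0..<1} \<subseteq> {0..(1::real)}" by auto
  ultimately show ?thesis by (rule order.trans)
qed

lemma L2_int_Dl:
  fixes w v :: "real \<Rightarrow> real"
  assumes v: "L2 v" and w: "continuous_on UNIV w" and i: "i < m"
  shows "set_integrable lborel (Dl m i) (\<lambda>t. w t * v t)"
  by (rule set_integrable_subset[OF L2_int_cont[OF v w]]) (use Dl_sub01[OF i] in auto)

lemma formA:
  assumes v: "L2 v"
  shows "inner_sigma \<sigma> (\<lambda>s. Qm m (Fderiv x0 (Qm m v)) s) v
     = 2 * real m ^ 2 * (\<Sum>i<m. \<Sum>j<m. a v j * kap i j * cc v i)"
proof -
  define \<gamma> where "\<gamma> i = 2 * real m ^ 2 * (\<Sum>j<m. a v j * kap i j)" for i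
  have "inner_sigma \<sigma> (\<lambda>s. Qm m (Fderiv x0 (Qm m v)) s) v
      = (LBINT t:{0..1}. (exp (- 2 * \<sigma> * t) * v t) * \<gamma> (idx m t))"
    unfolding inner_sigma_def A_formula \<gamma>_def by (simp add: algebra_simps)
  also have "\<dots> = (\<Sum>i<m. \<gamma> i * cc v i)"
    unfolding cc_def by (rule split_cells[OF m1 L2_int_cont[OF v]]) (intro continuous_intros)
  also have "\<dots> = 2 * real m ^ 2 * (\<Sum>i<m. \<Sum>j<m. a v j * kap i j * cc v i)"
    by (simp add: \<gamma>_def sum_distrib_left sum_distrib_right algebra_simps)
  finally show ?thesis .
qed

lemma formB:
  assumes v: "L2 v"
  shows "inner_sigma \<sigma> (\<lambda>s. Qms \<sigma> m (Fderiv x0 (Qms \<sigma> m v)) s) v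
     = 2 * real m ^ 2 * (\<Sum>i<m. \<Sum>j<m. b v j * lam i j * b v i)"
proof -
  define \<gamma> where "\<gamma> i = 2 * real m ^ 2 * (\<Sum>j<m. b v j * lam i j)" for i
  have e: "exp (- 2 * \<sigma> * t) * exp (\<sigma> * t) = exp (- \<sigma> * t)" for t
    by (simp add: exp_add[symmetric] algebra_simps)
  have "inner_sigma \<sigma> (\<lambda>s. Qms \<sigma> m (Fderiv x0 (Qms \<sigma> m v)) s) v
      = (LBINT t:{0..1}. (exp (- \<sigma> * t) * v t) * \<gamma> (idx m t))"
    unfolding inner_sigma_def B_formula \<gamma>_def
  proof (rule set_lebesgue_integral_cong)
    show "\<forall>t. t \<in> {0..1} \<longrightarrow> exp (- 2 * \<sigma> * t) * (exp (\<sigma> * t) * (2 * real m ^ 2 * (\<Sum>j<m. b v j * lam (idx m t) j))) * v t =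
        exp (- \<sigma> * t) * v t * (2 * real m ^ 2 * (\<Sum>j<m. b v j * lam (idx m t) j))"
    proof (intro allI impI)
      fix t :: real
      show "exp (- 2 * \<sigma> * t) * (exp (\<sigma> * t) * (2 * real m ^ 2 * (\<Sum>j<m. b v j * lam (idx m t) j))) * v t =
        exp (- \<sigma> * t) * v t * (2 * real m ^ 2 * (\<Sum>j<m. b v j * lam (idx m t) j))"
        by (subst e[symmetric]) algebra
    qed
  qed simp
  also have "\<dots> = (\<Sum>i<m. \<gamma> i * b v i)"
    unfolding b_def by (rule split_cells[OF m1 L2_int_cont[OF v]]) (intro continuous_intros)
  also have "\<dots> = 2 * real m ^ 2 * (\<Sum>i<m. \<Sum>j<m. b v j * lam i j * b v i)"
    by (simp add: \<gamma>_def sum_distrib_left sum_distrib_right algebra_simps)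
  finally show ?thesis .
qed

lemma normsq:
  assumes v: "L2 v"
  shows "inner_sigma \<sigma> v v = (\<Sum>i<m. N v i)"
proof -
  have "inner_sigma \<sigma> v v = (LBINT t:{0..1}. (exp (- 2 * \<sigma> * t) * (v t)^2) * 1)"
    unfolding inner_sigma_def by (simp add: power2_eq_square mult.assoc)
  also have "\<dots> = (\<Sum>i<m. 1 * N v i)"
    unfolding N_def
    by (rule split_cells[OF m1]) (auto simp: power2_eq_square mult.assoc[symmetric] intro!: L2_int2_cont[OF v v] continuous_intros)
  finally show ?thesis by simp
qed

lemma Bgen:
  fixes w :: "real \<Rightarrow> real"
  assumes v: "L2 v" and k: "k < m" and w: "continuous_on UNIV w" and K: "\<And>s. s \<in> Dl m k \<Longrightarrow> \<bar>w s\<bar> \<le> K"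
  shows "\<bar>LBINT s:Dl m k. w s * (exp (- \<sigma> * s) * v s)\<bar> \<le> K * T v k"
proof -
  have i1: "set_integrable lborel (Dl m k) (\<lambda>s. (w s * exp (- \<sigma> * s)) * v s)"
    by (rule L2_int_Dl[OF v _ k]) (intro continuous_intros w)
  have i2: "set_integrable lborel (Dl m k) (\<lambda>s. exp (- \<sigma> * s) * v s)"
    by (rule L2_int_Dl[OF v _ k]) (intro continuous_intros)
  have "\<bar>LBINT s:Dl m k. w s * (exp (- \<sigma> * s) * v s)\<bar> \<le> (LBINT s:Dl m k. \<bar>w s * (exp (- \<sigma> * s) * v s)\<bar>)"
    using set_integral_norm_bound[OF i1] by (simp add: mult.assoc)
  also have "\<dots> \<le> (LBINT s:Dl m k. K * (exp (- \<sigma> * s) * \<bar>v s\<bar>))"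
  proof (rule set_integral_mono)
    show "set_integrable lborel (Dl m k) (\<lambda>s. \<bar>w s * (exp (- \<sigma> * s) * v s)\<bar>)"
      using set_integrable_abs[OF i1] by (simp add: mult.assoc)
    have "set_integrable lborel (Dl m k) (\<lambda>s. \<bar>exp (- \<sigma> * s) * v s\<bar>)" by (rule set_integrable_abs[OF i2])
    then show "set_integrable lborel (Dl m k) (\<lambda>s. K * (exp (- \<sigma> * s) * \<bar>v s\<bar>))"
      by (simp add: abs_mult)
    fix s assume s: "s \<in> Dl m k"
    show "\<bar>w s * (exp (- \<sigma> * s) * v s)\<bar> \<le> K * (exp (- \<sigma> * s) * \<bar>v s\<bar>)"
      using K[OF s] by (simp add: abs_mult mult_right_mono)
  qed
  also have "\<dots> = K * T v k" by (simp add: T_def)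
  finally show ?thesis .
qed

end

context ctx begin

abbreviation E :: "(real \<Rightarrow> real) \<Rightarrow> real \<Rightarrow> real" where "E v s \<equiv> exp (- \<sigma> * s) * v s"

lemma Dl_lin:
  fixes w1 w2 :: "real \<Rightarrow> real"
  assumes v: "L2 v" and k: "k < m" and w1: "continuous_on UNIV w1" and w2: "continuous_on UNIV w2"
  shows "(LBINT s:Dl m k. w1 s * E v s) - c * (LBINT s:Dl m k. w2 s * E v s)
       = (LBINT s:Dl m k. (w1 s - c * w2 s) * E v s)"
proof -
  have i1: "set_integrable lborel (Dl m k) (\<lambda>s. (w1 s * exp (- \<sigma> * s)) * v s)"
    by (rule L2_int_Dl[OF v _ k]) (intro continuous_intros w1)
  have i2: "set_integrable lborel (Dl m k) (\<lambda>s. (c * (w2 s * exp (- \<sigma> * s))) * v s)"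
    by (rule L2_int_Dl[OF v _ k]) (intro continuous_intros w2)
  have "(LBINT s:Dl m k. w1 s * E v s) - c * (LBINT s:Dl m k. w2 s * E v s)
      = (LBINT s:Dl m k. (w1 s * exp (- \<sigma> * s)) * v s) - (LBINT s:Dl m k. (c * (w2 s * exp (- \<sigma> * s))) * v s)"
    by (simp add: mult.assoc)
  also have "\<dots> = (LBINT s:Dl m k. (w1 s * exp (- \<sigma> * s)) * v s - (c * (w2 s * exp (- \<sigma> * s))) * v s)"
    by (rule set_integral_diff(2)[symmetric, OF i1 i2])
  also have "\<dots> = (LBINT s:Dl m k. (w1 s - c * w2 s) * E v s)"
    by (simp add: algebra_simps)
  finally show ?thesis .
qed

lemma R_cc: "cc v i = (LBINT s:Dl m i. exp (- \<sigma> * s) * E v s)"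
proof -
  have "exp (- 2 * \<sigma> * s) = exp (- \<sigma> * s) * exp (- \<sigma> * s)" for s
    by (simp add: exp_add[symmetric])
  then show ?thesis unfolding cc_def by (simp add: mult.assoc)
qed

lemma R_a: "a v j = (LBINT s:Dl m j. exp (\<sigma> * s) * E v s)"
proof -
  have "exp (\<sigma> * s) * exp (- \<sigma> * s) = 1" for s by (simp add: exp_add[symmetric])
  then show ?thesis unfolding a_def by (simp add: mult.assoc[symmetric])
qed

lemma R_b: "b v j = (LBINT s:Dl m j. 1 * E v s)"
  unfolding b_def by simp

lemma T_nonneg: "T v i \<ge> 0"
  unfolding T_def set_lebesgue_integral_def
  by (rule Bochner_Integration.integral_nonneg) (auto simp: indicator_def)

lemma exp_mono_cell:
  assumes "s \<in> Dl m k"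
  shows "exp (- \<sigma> * (real (k+1) / real m)) \<le> exp (- \<sigma> * s)" "exp (- \<sigma> * s) \<le> exp (- \<sigma> * (real k / real m))"
    "exp (\<sigma> * (real k / real m)) \<le> exp (\<sigma> * s)" "exp (\<sigma> * s) \<le> exp (\<sigma> * (real (k+1) / real m))"
proof -
  have s: "real k / real m \<le> s" "s \<le> real (k+1) / real m" using Dl_mem[OF assms] by auto
  have h1: "\<sigma> * (real k / real m) \<le> \<sigma> * s" by (rule mult_left_mono[OF s(1)]) (use sig in simp)
  have h2: "\<sigma> * s \<le> \<sigma> * (real (k+1) / real m)" by (rule mult_left_mono[OF s(2)]) (use sig in simp)
  show "exp (- \<sigma> * (real (k+1) / real m)) \<le> exp (- \<sigma> * s)" "exp (- \<sigma> * s) \<le> exp (- \<sigma> * (real k / real m))"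
    "exp (\<sigma> * (real k / real m)) \<le> exp (\<sigma> * s)" "exp (\<sigma> * s) \<le> exp (\<sigma> * (real (k+1) / real m))"
    using h1 h2 by simp_all
qed

lemma PB:
  assumes v: "L2 v" and i: "i < m" and j: "j < m" and r: "r \<in> Dl m i"
    and t: "real j / real m \<le> t" "t \<le> real (j+1) / real m" "t \<le> r"
  shows "\<bar>cc v i * a v j - exp (- \<sigma> * (r - t)) * (b v i * b v j)\<bar> \<le> 2 * (exp (\<sigma> / real m) - 1) * T v i * T v j"
proof -
  define p where "p = exp (- \<sigma> * (real i / real m))"
  define P where "P = exp (- \<sigma> * (real (i+1) / real m))"
  define q where "q = exp (\<sigma> * (real j / real m))"
  define Q where "Q = exp (\<sigma> * (real (j+1) / real m))"
  have ri: "real i / real m \<le> r" "r < real (i+1) / real m" using Dl_mem[OF r] by auto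
  have "real j / real m < real (i+1) / real m" using t ri by linarith
  then have ji: "j \<le> i" using mpos by (simp add: divide_strict_right_mono_neg divide_less_cancel)
  have A1: "\<bar>cc v i - exp (- \<sigma> * r) * b v i\<bar> \<le> (p - P) * T v i"
  proof -
    have "cc v i - exp (- \<sigma> * r) * b v i = (LBINT s:Dl m i. (exp (- \<sigma> * s) - exp (- \<sigma> * r) * 1) * E v s)"
      unfolding R_cc R_b by (rule Dl_lin[OF v i]) (intro continuous_intros)+
    also have "\<bar>\<dots>\<bar> \<le> (p - P) * T v i"
    proof (rule Bgen[OF v i])
      fix s assume s: "s \<in> Dl m i"
      have f: "P \<le> exp (- \<sigma> * s)" "exp (- \<sigma> * s) \<le> p" "P \<le> exp (- \<sigma> * r)" "exp (- \<sigma> * r) \<le> p"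
        using exp_mono_cell[OF s] exp_mono_cell[OF r] unfolding p_def P_def by auto
      then show "\<bar>exp (- \<sigma> * s) - exp (- \<sigma> * r) * 1\<bar> \<le> p - P"
        by (simp only: mult_1_right abs_le_iff) linarith
    qed (intro continuous_intros)
    finally show ?thesis .
  qed
  have A2: "\<bar>a v j - exp (\<sigma> * t) * b v j\<bar> \<le> (Q - q) * T v j"
  proof -
    have "a v j - exp (\<sigma> * t) * b v j = (LBINT s:Dl m j. (exp (\<sigma> * s) - exp (\<sigma> * t) * 1) * E v s)"
      unfolding R_a R_b by (rule Dl_lin[OF v j]) (intro continuous_intros)+
    also have "\<bar>\<dots>\<bar> \<le> (Q - q) * T v j"
    proof (rule Bgen[OF v j])
      fix s assume s: "s \<in> Dl m j"
      have "q \<le> exp (\<sigma> * t)" "exp (\<sigma> * t) \<le> Q"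
      proof -
        have "\<sigma> * (real j / real m) \<le> \<sigma> * t" by (rule mult_left_mono[OF t(1)]) (use sig in simp)
        moreover have "\<sigma> * t \<le> \<sigma> * (real (j+1) / real m)" by (rule mult_left_mono[OF t(2)]) (use sig in simp)
        ultimately show "q \<le> exp (\<sigma> * t)" "exp (\<sigma> * t) \<le> Q" unfolding q_def Q_def by simp_all
      qed
      moreover have "q \<le> exp (\<sigma> * s)" "exp (\<sigma> * s) \<le> Q"
        using exp_mono_cell[OF s] unfolding q_def Q_def by auto
      ultimately show "\<bar>exp (\<sigma> * s) - exp (\<sigma> * t) * 1\<bar> \<le> Q - q"
        by (simp only: mult_1_right abs_le_iff) linarith
    qed (intro continuous_intros)
    finally show ?thesis .
  qed
  have A3: "\<bar>a v j\<bar> \<le> Q * T v j"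
    unfolding R_a Q_def by (rule Bgen[OF v j]) (auto intro!: continuous_intros dest: exp_mono_cell)
  have A4: "\<bar>exp (- \<sigma> * r) * b v i\<bar> \<le> p * T v i"
  proof -
    have "\<bar>exp (- \<sigma> * r) * b v i\<bar> = exp (- \<sigma> * r) * \<bar>b v i\<bar>" by (simp add: abs_mult)
    also have "\<bar>b v i\<bar> \<le> 1 * T v i" unfolding R_b by (rule Bgen[OF v i]) (auto intro!: continuous_intros)
    then have "exp (- \<sigma> * r) * \<bar>b v i\<bar> \<le> exp (- \<sigma> * r) * T v i" by simp
    also have "\<dots> \<le> p * T v i"
      using exp_mono_cell(2)[OF r] T_nonneg unfolding p_def by (intro mult_right_mono) auto
    finally show ?thesis .
  qed
  have split: "cc v i * a v j - exp (- \<sigma> * (r - t)) * (b v i * b v j)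
      = (cc v i - exp (- \<sigma> * r) * b v i) * a v j + (exp (- \<sigma> * r) * b v i) * (a v j - exp (\<sigma> * t) * b v j)"
  proof -
    have "exp (- \<sigma> * (r - t)) = exp (- \<sigma> * r) * exp (\<sigma> * t)" by (simp add: exp_add[symmetric] algebra_simps)
    then show ?thesis by (simp add: algebra_simps)
  qed
  have "\<bar>cc v i * a v j - exp (- \<sigma> * (r - t)) * (b v i * b v j)\<bar>
      \<le> \<bar>cc v i - exp (- \<sigma> * r) * b v i\<bar> * \<bar>a v j\<bar> + \<bar>exp (- \<sigma> * r) * b v i\<bar> * \<bar>a v j - exp (\<sigma> * t) * b v j\<bar>"
    unfolding split by (metis abs_mult abs_triangle_ineq)
  also have "\<dots> \<le> ((p - P) * T v i) * (Q * T v j) + (p * T v i) * ((Q - q) * T v j)"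
  proof -
    have "0 \<le> (p - P) * T v i" using A1 by (meson abs_ge_zero order_trans)
    moreover have "0 \<le> p * T v i" using A4 by (meson abs_ge_zero order_trans)
    ultimately show ?thesis by (intro add_mono mult_mono A1 A2 A3 A4) auto
  qed
  also have "\<dots> = T v i * T v j * (2 * (p * Q) - P * Q - p * q)" by (simp add: algebra_simps)
  also have "2 * (p * Q) - P * Q - p * q = 2 * (exp (\<sigma> / real m) - 1) * exp (\<sigma> * (real j - real i) / real m)"
  proof -
    have "p * Q = exp (\<sigma> / real m) * exp (\<sigma> * (real j - real i) / real m)"
      "P * Q = exp (\<sigma> * (real j - real i) / real m)" "p * q = exp (\<sigma> * (real j - real i) / real m)"
      unfolding p_def P_def q_def Q_def using mpos by (simp_all add: exp_add[symmetric] field_simps)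
    then show ?thesis by (simp add: algebra_simps)
  qed
  also have "T v i * T v j * (2 * (exp (\<sigma> / real m) - 1) * exp (\<sigma> * (real j - real i) / real m))
      \<le> T v i * T v j * (2 * (exp (\<sigma> / real m) - 1) * 1)"
  proof (intro mult_left_mono)
    show "exp (\<sigma> * (real j - real i) / real m) \<le> 1"
      using ji sig mpos by (simp add: mult_nonneg_nonpos divide_nonpos_pos)
    show "0 \<le> 2 * (exp (\<sigma> / real m) - 1)" using sig mpos by simp
    show "0 \<le> T v i * T v j" using T_nonneg by simp
  qed
  finally show ?thesis by (simp add: algebra_simps)
qed

end

context ctx begin

lemma Sr_mem:
  assumes r: "0 \<le> r" "r \<le> 1" and j: "j < m" and t: "t \<in> {0..r} \<inter> {t. idx m t = j}"
  shows "real j / real m \<le> t" "t \<le> real (j+1) / real m" "t \<le> r"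
proof -
  have c: "j < m \<and> real j / real m \<le> t \<and> (t < real (j+1) / real m \<or> j = m - 1)"
    using idx_char[OF m1, of t j] t r by auto
  have "j = m - 1 \<Longrightarrow> real (j+1) / real m = 1" using m1 by auto
  then show "real j / real m \<le> t" "t \<le> real (j+1) / real m" "t \<le> r" using c t r by auto
qed

lemma Sr_int:
  fixes w :: "real \<Rightarrow> real"
  assumes wc: "continuous_on UNIV w"
  shows "set_integrable lborel ({0..r} \<inter> {t. idx m t = j}) (\<lambda>t. w (r - t))"
proof -
  have "continuous_on {0..r} (\<lambda>t. w (r - t))"
    by (rule continuous_on_compose2[OF wc]) (auto intro!: continuous_intros)
  moreover have "{0..r} \<inter> {t. idx m t = j} \<in> sets borel" by measurable
  ultimately show ?thesis by (rule cont_int_sub) auto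
qed

lemma L_a:
  assumes r: "0 \<le> r" "r \<le> 1" and j: "j < m"
  shows "C * Ph X m j r - D * Ph Z m j r
     = (LBINT t:{0..r} \<inter> {t. idx m t = j}. C * x0c (r - t) - D * gB (r - t))"
proof -
  have PX: "Ph X m j r = (LBINT t:{0..r} \<inter> {t. idx m t = j}. x0c (r - t))"
    using conv_cell[OF m1 X_deriv x0c_cont r j] by (simp add: Ph_def)
  have PZ: "Ph Z m j r = (LBINT t:{0..r} \<inter> {t. idx m t = j}. gB (r - t))"
    using conv_cell[OF m1 Z_deriv gB_cont r j] by (simp add: Ph_def)
  show ?thesis
    unfolding PX PZ
    by (subst set_integral_diff(2)) (auto intro!: Sr_int x0c_cont gB_cont continuous_intros)
qed

lemma L_b:
  assumes v: "L2 v" and i: "i < m" and j: "j < m" and r: "r \<in> Dl m i"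
    and t: "t \<in> {0..r} \<inter> {t. idx m t = j}"
  shows "\<bar>cc v i * a v j * x0c (r - t) - b v i * b v j * gB (r - t)\<bar>
     \<le> 2 * (exp (\<sigma> / real m) - 1) * T v i * T v j * x0c (r - t)"
proof -
  have r01: "0 \<le> r" "r \<le> 1" using Dl_sub[OF i] r by auto
  note tt = Sr_mem[OF r01 j t]
  have eq: "cc v i * a v j * x0c (r - t) - b v i * b v j * gB (r - t)
      = x0c (r - t) * (cc v i * a v j - exp (- \<sigma> * (r - t)) * (b v i * b v j))"
    unfolding gB_def by (simp only: mult.commute mult.left_commute right_diff_distrib)
  have xp: "x0c (r - t) > 0" by (rule x0c_pos)
  have "\<bar>cc v i * a v j * x0c (r - t) - b v i * b v j * gB (r - t)\<bar>
      = x0c (r - t) * \<bar>cc v i * a v j - exp (- \<sigma> * (r - t)) * (b v i * b v j)\<bar>"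
    unfolding eq abs_mult using xp by simp
  also have "\<dots> \<le> x0c (r - t) * (2 * (exp (\<sigma> / real m) - 1) * T v i * T v j)"
    by (rule mult_left_mono[OF PB[OF v i j r tt]]) (use xp in simp)
  finally show ?thesis by (simp only: mult.commute mult.left_commute)
qed

lemma inner_PP:
  assumes v: "L2 v" and i: "i < m" and j: "j < m" and r: "r \<in> Dl m i"
  shows "\<bar>cc v i * a v j * Ph X m j r - b v i * b v j * Ph Z m j r\<bar>
     \<le> 2 * (exp (\<sigma> / real m) - 1) * T v i * T v j * Ph X m j r"
proof -
  define S where "S = {0..r} \<inter> {t. idx m t = j}"
  define Eb where "Eb = 2 * (exp (\<sigma> / real m) - 1) * T v i * T v j"
  have r01: "0 \<le> r" "r \<le> 1" using Dl_sub[OF i] r by auto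
  have i1: "set_integrable lborel S (\<lambda>t. cc v i * a v j * x0c (r - t) - b v i * b v j * gB (r - t))"
    unfolding S_def by (intro set_integral_diff(1) set_integrable_mult_right Sr_int x0c_cont gB_cont)
  have i2: "set_integrable lborel S (\<lambda>t. Eb * x0c (r - t))"
    unfolding S_def by (intro set_integrable_mult_right Sr_int x0c_cont)
  have PX: "Ph X m j r = (LBINT t:S. x0c (r - t))"
    using conv_cell[OF m1 X_deriv x0c_cont r01 j] by (simp add: Ph_def S_def)
  have e1: "cc v i * a v j * Ph X m j r - b v i * b v j * Ph Z m j r
      = (LBINT t:S. cc v i * a v j * x0c (r - t) - b v i * b v j * gB (r - t))"
    unfolding S_def by (rule L_a[OF r01 j])
  have e2: "\<bar>LBINT t:S. cc v i * a v j * x0c (r - t) - b v i * b v j * gB (r - t)\<bar>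
      \<le> (LBINT t:S. \<bar>cc v i * a v j * x0c (r - t) - b v i * b v j * gB (r - t)\<bar>)"
    using set_integral_norm_bound[OF i1] by simp
  have e3: "(LBINT t:S. \<bar>cc v i * a v j * x0c (r - t) - b v i * b v j * gB (r - t)\<bar>)
      \<le> (LBINT t:S. Eb * x0c (r - t))"
  proof (rule set_integral_mono[OF set_integrable_abs[OF i1] i2])
    fix t assume t: "t \<in> S"
    show "\<bar>cc v i * a v j * x0c (r - t) - b v i * b v j * gB (r - t)\<bar> \<le> Eb * x0c (r - t)"
      unfolding Eb_def by (rule L_b[OF v i j r]) (use t in \<open>simp add: S_def\<close>)
  qed
  have e4: "(LBINT t:S. Eb * x0c (r - t)) = Eb * Ph X m j r" unfolding PX by simp
  show ?thesis using e1 e2 e3 e4 unfolding Eb_def by linarith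
qed

lemma PP:
  assumes v: "L2 v" and i: "i < m" and j: "j < m"
  shows "\<bar>a v j * kap i j * cc v i - b v j * lam i j * b v i\<bar> \<le> 2 * (exp (\<sigma> / real m) - 1) * T v i * T v j * kap i j"
proof -
  define Eb where "Eb = 2 * (exp (\<sigma> / real m) - 1) * T v i * T v j"
  have iX: "set_integrable lborel (Dl m i) (\<lambda>r. cc v i * a v j * Ph X m j r)"
    by (intro set_integrable_mult_right Dl_int Ph_cont X_cont)
  have iZ: "set_integrable lborel (Dl m i) (\<lambda>r. b v i * b v j * Ph Z m j r)"
    by (intro set_integrable_mult_right Dl_int Ph_cont Z_cont)
  have iE: "set_integrable lborel (Dl m i) (\<lambda>r. Eb * Ph X m j r)"
    by (intro set_integrable_mult_right Dl_int Ph_cont X_cont)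
  have e0: "a v j * kap i j * cc v i - b v j * lam i j * b v i
      = (LBINT r:Dl m i. cc v i * a v j * Ph X m j r - b v i * b v j * Ph Z m j r)"
    unfolding kap_def lam_def set_integral_diff(2)[OF iX iZ] by (simp add: mult_ac)
  have e1: "\<bar>LBINT r:Dl m i. cc v i * a v j * Ph X m j r - b v i * b v j * Ph Z m j r\<bar>
     \<le> (LBINT r:Dl m i. \<bar>cc v i * a v j * Ph X m j r - b v i * b v j * Ph Z m j r\<bar>)"
    using set_integral_norm_bound[OF set_integral_diff(1)[OF iX iZ]] by simp
  have e2: "(LBINT r:Dl m i. \<bar>cc v i * a v j * Ph X m j r - b v i * b v j * Ph Z m j r\<bar>)
     \<le> (LBINT r:Dl m i. Eb * Ph X m j r)"
    by (rule set_integral_mono[OF set_integrable_abs[OF set_integral_diff(1)[OF iX iZ]] iE])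
       (unfold Eb_def, rule inner_PP[OF v i j])
  have e3: "(LBINT r:Dl m i. Eb * Ph X m j r) = Eb * kap i j" unfolding kap_def by simp
  show ?thesis using e0 e1 e2 e3 unfolding Eb_def by linarith
qed

end

context ctx begin

lemma N_nonneg: "N v i \<ge> 0"
  unfolding N_def set_lebesgue_integral_def
  by (rule Bochner_Integration.integral_nonneg) (auto simp: indicator_def)

lemma cell_CS:
  assumes v: "L2 v" and i: "i < m"
  shows "(T v i)^2 \<le> N v i / real m"
proof -
  define \<mu> where "\<mu> = T v i * real m"
  define f where "f t = exp (- \<sigma> * t) * \<bar>v t\<bar>" for t
  have iE: "set_integrable lborel (Dl m i) (\<lambda>t. exp (- \<sigma> * t) * v t)"
    by (rule L2_int_Dl[OF v _ i]) (intro continuous_intros)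
  have if1: "set_integrable lborel (Dl m i) f"
    unfolding f_def using set_integrable_abs[OF iE] by (simp add: abs_mult)
  have if2: "set_integrable lborel (Dl m i) (\<lambda>t. exp (- 2 * \<sigma> * t) * (v t)^2)"
  proof -
    have "set_integrable lborel {0..1} (\<lambda>t. exp (- 2 * \<sigma> * t) * v t * v t)"
      by (rule L2_int2_cont[OF v v]) (intro continuous_intros)
    then have "set_integrable lborel (Dl m i) (\<lambda>t. exp (- 2 * \<sigma> * t) * v t * v t)"
      by (rule set_integrable_subset) (use Dl_sub01[OF i] in auto)
    then show ?thesis by (simp add: power2_eq_square mult.assoc)
  qed
  have fsq: "(f t)^2 = exp (- 2 * \<sigma> * t) * (v t)^2" for t
  proof -
    have "(exp (- \<sigma> * t))^2 = exp (- 2 * \<sigma> * t)" by (simp add: power2_eq_square exp_add[symmetric])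
    then show ?thesis unfolding f_def by (simp add: power_mult_distrib)
  qed
  have ic: "set_integrable lborel (Dl m i) (\<lambda>t. \<mu>^2)"
    by (rule Dl_int) (intro continuous_intros)
  have "0 \<le> (LBINT t:Dl m i. (f t - \<mu>)^2)"
    unfolding set_lebesgue_integral_def
    by (rule Bochner_Integration.integral_nonneg) (auto simp: indicator_def)
  also have "(LBINT t:Dl m i. (f t - \<mu>)^2) = (LBINT t:Dl m i. (exp (- 2 * \<sigma> * t) * (v t)^2 - 2 * \<mu> * f t) + \<mu>^2)"
    by (rule set_lebesgue_integral_cong) (auto simp: power2_diff fsq algebra_simps)
  also have "\<dots> = N v i - 2 * \<mu> * T v i + \<mu>^2 / real m"
  proof -
    have "(LBINT t:Dl m i. (exp (- 2 * \<sigma> * t) * (v t)^2 - 2 * \<mu> * f t) + \<mu>^2)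
        = (LBINT t:Dl m i. exp (- 2 * \<sigma> * t) * (v t)^2 - 2 * \<mu> * f t) + (LBINT t:Dl m i. \<mu>^2)"
      by (rule set_integral_add(2)) (use if1 if2 ic in auto)
    also have "(LBINT t:Dl m i. exp (- 2 * \<sigma> * t) * (v t)^2 - 2 * \<mu> * f t)
        = (LBINT t:Dl m i. exp (- 2 * \<sigma> * t) * (v t)^2) - (LBINT t:Dl m i. 2 * \<mu> * f t)"
      by (rule set_integral_diff(2)) (use if1 if2 in auto)
    also have "(LBINT t:Dl m i. \<mu>^2) = \<mu>^2 / real m" by (rule Dl_measure_int[OF i])
    finally show ?thesis by (simp add: N_def T_def f_def)
  qed
  finally have "0 \<le> N v i - 2 * \<mu> * T v i + \<mu>^2 / real m" .
  then have "0 \<le> N v i - real m * (T v i)^2"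
    unfolding \<mu>_def using mpos by (simp add: power2_eq_square field_simps)
  then show ?thesis using mpos by (simp add: field_simps)
qed

lemma schur:
  "(\<Sum>i<m. \<Sum>j<m. kap i j * (T v i * T v j)) \<le> Lc / real m * (\<Sum>i<m. (T v i)^2)"
proof -
  have "(\<Sum>i<m. \<Sum>j<m. kap i j * (T v i * T v j))
      \<le> (\<Sum>i<m. \<Sum>j<m. kap i j * ((T v i)^2 / 2 + (T v j)^2 / 2))"
  proof (intro sum_mono mult_left_mono kap_nonneg)
    fix i j
    have "0 \<le> (T v i - T v j)^2" by simp
    then show "T v i * T v j \<le> (T v i)^2 / 2 + (T v j)^2 / 2" by (simp add: power2_diff)
  qed
  also have "\<dots> = (\<Sum>i<m. (T v i)^2 / 2 * (\<Sum>j<m. kap i j)) + (\<Sum>j<m. (T v j)^2 / 2 * (\<Sum>i<m. kap i j))"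
  proof -
    have "(\<Sum>i<m. \<Sum>j<m. kap i j * ((T v i)^2 / 2 + (T v j)^2 / 2))
        = (\<Sum>i<m. \<Sum>j<m. kap i j * ((T v i)^2 / 2)) + (\<Sum>i<m. \<Sum>j<m. kap i j * ((T v j)^2 / 2))"
      by (simp only: distrib_left sum.distrib)
    also have "(\<Sum>i<m. \<Sum>j<m. kap i j * ((T v i)^2 / 2)) = (\<Sum>i<m. (T v i)^2 / 2 * (\<Sum>j<m. kap i j))"
      by (intro sum.cong refl) (subst sum_distrib_right[symmetric], rule mult.commute)
    also have "(\<Sum>i<m. \<Sum>j<m. kap i j * ((T v j)^2 / 2)) = (\<Sum>j<m. \<Sum>i<m. kap i j * ((T v j)^2 / 2))"
      by (rule sum.swap)
    also have "\<dots> = (\<Sum>j<m. (T v j)^2 / 2 * (\<Sum>i<m. kap i j))"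
      by (intro sum.cong refl) (subst sum_distrib_right[symmetric], rule mult.commute)
    finally show ?thesis .
  qed
  also have "\<dots> \<le> (\<Sum>i<m. (T v i)^2 / 2 * (Lc / real m)) + (\<Sum>j<m. (T v j)^2 / 2 * (Lc / real m))"
    by (intro add_mono sum_mono mult_left_mono row_sum col_sum) auto
  also have "\<dots> = Lc / real m * (\<Sum>i<m. (T v i)^2)"
    by (simp add: sum_distrib_left sum_distrib_right algebra_simps)
  finally show ?thesis .
qed

lemma eps_bound: "exp (\<sigma> / real m) - 1 \<le> 2 * (\<sigma> / real m)"
proof -
  have x: "0 \<le> \<sigma> / real m" "\<sigma> / real m \<le> 1" using sig msig mpos by auto
  have "exp (\<sigma> / real m) \<le> 1 + \<sigma> / real m + (\<sigma> / real m)^2" by (rule exp_bound[OF x])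
  moreover have "(\<sigma> / real m) * (\<sigma> / real m) \<le> (\<sigma> / real m) * 1" by (rule mult_left_mono) (use x in auto)
  then have "(\<sigma> / real m)^2 \<le> \<sigma> / real m" by (simp add: power2_eq_square)
  ultimately show ?thesis by linarith
qed

lemma Lc_le: "Lc \<le> norm0 x0"
proof -
  have ix: "set_integrable lborel {0..1} x0" by (rule cont_int_Icc[OF cont])
  have ix2: "set_integrable lborel {0..1} (\<lambda>t. (x0 t)^2)" by (rule cont_int_Icc) (intro continuous_intros cont)
  have "Lc = (LBINT t:{0..1}. x0c t)"
    unfolding Lc_def by (rule FTC_Icc[symmetric]) (use X_deriv x0c_cont in auto)
  also have "\<dots> = (LBINT t:{0..1}. x0 t)"
    by (rule set_lebesgue_integral_cong) (auto simp: x0c_eq)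
  finally have L: "Lc = (LBINT t:{0..1}. x0 t)" .
  have "0 \<le> (LBINT t:{0..1}. (x0 t - Lc)^2)"
    unfolding set_lebesgue_integral_def
    by (rule Bochner_Integration.integral_nonneg) (auto simp: indicator_def)
  also have "(LBINT t:{0..1}. (x0 t - Lc)^2) = (LBINT t:{0..1}. ((x0 t)^2 - 2 * Lc * x0 t) + Lc^2)"
    by (rule set_lebesgue_integral_cong) (auto simp: power2_diff algebra_simps)
  also have "\<dots> = (LBINT t:{0..1}. (x0 t)^2) - 2 * Lc * (LBINT t:{0..1}. x0 t) + Lc^2"
  proof -
    have c: "set_integrable lborel {0..1} (\<lambda>t::real. Lc^2)" by (rule cont_int_Icc) simp
    have "(LBINT t:{0..1}. ((x0 t)^2 - 2 * Lc * x0 t) + Lc^2)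
        = (LBINT t:{0..1}. (x0 t)^2 - 2 * Lc * x0 t) + (LBINT t::real:{0..1}. Lc^2)"
      by (rule set_integral_add(2)) (use ix ix2 c in auto)
    also have "(LBINT t:{0..1}. (x0 t)^2 - 2 * Lc * x0 t) = (LBINT t:{0..1}. (x0 t)^2) - (LBINT t:{0..1}. 2 * Lc * x0 t)"
      by (rule set_integral_diff(2)) (use ix ix2 in auto)
    also have "(LBINT t::real:{0..1}. Lc^2) = Lc^2" using const_int_Icc[of 0 1 "Lc^2"] by simp
    finally show ?thesis by simp
  qed
  finally have "Lc^2 \<le> (LBINT t:{0..1}. (x0 t)^2)" unfolding L[symmetric] by (simp add: power2_eq_square)
  then show ?thesis unfolding norm0_def by (rule real_le_rsqrt)
qed

end

context ctx begin

lemma part1: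
  assumes v: "L2 v" and hyp: "inner_sigma \<sigma> (\<lambda>s. Qms \<sigma> m (Fderiv x0 (Qms \<sigma> m v)) s) v \<ge> 0"
  shows "inner_sigma \<sigma> (\<lambda>s. Qm m (Fderiv x0 (Qm m v)) s) v \<ge> - (8 * \<sigma> * norm0 x0 / real m) * inner_sigma \<sigma> v v"
proof -
  define SA where "SA = (\<Sum>i<m. \<Sum>j<m. a v j * kap i j * cc v i)"
  define SB where "SB = (\<Sum>i<m. \<Sum>j<m. b v j * lam i j * b v i)"
  define \<epsilon> where "\<epsilon> = exp (\<sigma> / real m) - 1"
  define K where "K = (\<Sum>i<m. N v i)"
  have \<epsilon>0: "\<epsilon> \<ge> 0" unfolding \<epsilon>_def using sig mpos by simp
  have K0: "K \<ge> 0" unfolding K_def by (intro sum_nonneg N_nonneg)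
  have m2: "real m ^ 2 > 0" using mpos by simp
  have SB0: "SB \<ge> 0" using hyp unfolding formB[OF v] SB_def using m2 by (simp add: zero_le_mult_iff)
  have e0: "SA - SB = (\<Sum>i<m. \<Sum>j<m. a v j * kap i j * cc v i - b v j * lam i j * b v i)"
    unfolding SA_def SB_def by (simp add: sum_subtractf)
  have "\<bar>SA - SB\<bar> \<le> (\<Sum>i<m. \<Sum>j<m. \<bar>a v j * kap i j * cc v i - b v j * lam i j * b v i\<bar>)"
    unfolding e0 by (rule order_trans[OF sum_abs]) (intro sum_mono sum_abs)
  also have "\<dots> \<le> (\<Sum>i<m. \<Sum>j<m. 2 * \<epsilon> * T v i * T v j * kap i j)"
    unfolding \<epsilon>_def by (intro sum_mono PP[OF v]) auto
  also have "\<dots> = 2 * \<epsilon> * (\<Sum>i<m. \<Sum>j<m. kap i j * (T v i * T v j))"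
    by (simp add: sum_distrib_left mult_ac)
  also have "\<dots> \<le> 2 * \<epsilon> * (Lc / real m * (\<Sum>i<m. (T v i)^2))"
    by (rule mult_left_mono[OF schur]) (use \<epsilon>0 in simp)
  also have "\<dots> \<le> 2 * \<epsilon> * (Lc / real m * (\<Sum>i<m. N v i / real m))"
    by (intro mult_left_mono sum_mono cell_CS[OF v]) (use \<epsilon>0 Lc_nonneg mpos in auto)
  also have "\<dots> = 2 * \<epsilon> * Lc * K / (real m ^ 2)"
    unfolding K_def by (simp add: sum_divide_distrib[symmetric] power2_eq_square)
  finally have d: "\<bar>SA - SB\<bar> \<le> 2 * \<epsilon> * Lc * K / (real m ^ 2)" .
  have "SA \<ge> - (2 * \<epsilon> * Lc * K / (real m ^ 2))" using d SB0 by linarith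
  then have "2 * real m ^ 2 * SA \<ge> 2 * real m ^ 2 * (- (2 * \<epsilon> * Lc * K / (real m ^ 2)))"
    using m2 by (intro mult_left_mono) auto
  also have "2 * real m ^ 2 * (- (2 * \<epsilon> * Lc * K / (real m ^ 2))) = - (4 * \<epsilon> * Lc * K)"
    using m2 by (simp add: field_simps)
  finally have A: "2 * real m ^ 2 * SA \<ge> - (4 * \<epsilon> * Lc * K)" .
  have "4 * \<epsilon> * Lc * K \<le> 4 * (2 * (\<sigma> / real m)) * norm0 x0 * K"
    by (intro mult_right_mono mult_mono eps_bound[folded \<epsilon>_def] Lc_le) (use \<epsilon>0 Lc_nonneg K0 sig mpos in auto)
  also have "\<dots> = (8 * \<sigma> * norm0 x0 / real m) * K" by simp
  finally have B: "4 * \<epsilon> * Lc * K \<le> (8 * \<sigma> * norm0 x0 / real m) * K" .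
  show ?thesis
    unfolding formA[OF v] normsq[OF v] SA_def[symmetric] K_def[symmetric] using A B by linarith
qed

end

lemma tri_solve:
  fixes M :: "nat \<Rightarrow> nat \<Rightarrow> real"
  assumes up: "\<And>i j. i < j \<Longrightarrow> M i j = 0" and dg: "\<And>i. i < n \<Longrightarrow> M i i \<noteq> 0"
  shows "\<exists>y. \<forall>i<n. (\<Sum>j<n. M i j * y j) = r i"
proof -
  have "k \<le> n \<Longrightarrow> \<exists>y. \<forall>i<k. (\<Sum>j<n. M i j * y j) = r i" for k
  proof (induction k)
    case 0 then show ?case by simp
  next
    case (Suc k)
    then obtain y where y: "\<forall>i<k. (\<Sum>j<n. M i j * y j) = r i" by auto
    have kn: "k < n" using Suc.prems by simp
    define y' where "y' = y(k := (r k - (\<Sum>j<k. M k j * y j)) / M k k)"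
    have "\<forall>i<Suc k. (\<Sum>j<n. M i j * y' j) = r i"
    proof (intro allI impI)
      fix i assume i: "i < Suc k"
      have red: "(\<Sum>j<n. M i j * y' j) = (\<Sum>j<Suc i. M i j * y' j)"
        by (rule sum.mono_neutral_right) (use i kn up in auto)
      show "(\<Sum>j<n. M i j * y' j) = r i"
      proof (cases "i = k")
        case True
        have "(\<Sum>j<Suc i. M i j * y' j) = (\<Sum>j<k. M k j * y j) + M k k * y' k"
          using True by (simp add: y'_def)
        also have "\<dots> = r k" using dg[OF kn] by (simp add: y'_def)
        finally show ?thesis using red True by simp
      next
        case False
        then have ik: "i < k" using i by simp
        have "(\<Sum>j<Suc i. M i j * y' j) = (\<Sum>j<Suc i. M i j * y j)"
          by (rule sum.cong) (use ik in \<open>auto simp: y'_def\<close>)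
        also have "\<dots> = (\<Sum>j<n. M i j * y j)"
          by (rule sum.mono_neutral_left) (use ik kn up in auto)
        finally show ?thesis using red y ik by simp
      qed
    qed
    then show ?case by blast
  qed
  then show ?thesis by blast
qed

lemma set_int_cong_AE':
  fixes f g :: "real \<Rightarrow> real"
  assumes "set_borel_measurable lborel A f" "set_borel_measurable lborel A g"
    and "AE x in lborel. x \<in> A \<longrightarrow> f x = g x"
  shows "(LBINT x:A. f x) = (LBINT x:A. g x)"
  unfolding set_lebesgue_integral_def
  by (rule integral_cong_AE) (use assms in \<open>auto simp: set_borel_measurable_def elim!: eventually_mono\<close>)

lemma sint_meas: "set_integrable lborel A (f :: real \<Rightarrow> real) \<Longrightarrow> set_borel_measurable lborel A f"
  unfolding set_integrable_def set_borel_measurable_def by (rule borel_measurable_integrable)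

lemma bounded_L2:
  fixes f :: "real \<Rightarrow> real"
  assumes f: "f \<in> borel_measurable borel" and K: "\<And>t. t \<in> {0..1} \<Longrightarrow> \<bar>f t\<bar> \<le> K"
  shows "L2 f"
  unfolding L2_def
proof
  show sb: "set_borel_measurable lborel {0..1} f"
    unfolding set_borel_measurable_def using f by (simp add: measurable_lborel1)
  show "set_integrable lborel {0..1} (\<lambda>t. (f t)^2)"
  proof (rule set_integrable_bound[where f="\<lambda>t::real. K^2"])
    show "set_integrable lborel {0..1} (\<lambda>t::real. K^2)" by (rule cont_int_Icc) simp
    show "set_borel_measurable lborel {0..1} (\<lambda>t. (f t)^2)"
      using sbm_times[OF f sb] by (simp add: power2_eq_square)
    show "AE t in lborel. t \<in> {0..1} \<longrightarrow> norm ((f t)^2) \<le> norm (K^2)"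
    proof (intro AE_I2 impI)
      fix t :: real assume t: "t \<in> {0..1}"
      have "\<bar>f t\<bar>^2 \<le> K^2" by (rule power_mono[OF K[OF t]]) simp
      then show "norm ((f t)^2) \<le> norm (K^2)" by simp
    qed
  qed
qed

lemma sbm_add:
  fixes u w :: "real \<Rightarrow> real"
  assumes "set_borel_measurable lborel A u" "set_borel_measurable lborel A w"
  shows "set_borel_measurable lborel A (\<lambda>t. u t + w t)"
proof -
  have "(\<lambda>t. (indicator A t *\<^sub>R u t) + (indicator A t *\<^sub>R w t)) \<in> borel_measurable lborel"
    using assms unfolding set_borel_measurable_def by (rule borel_measurable_add)
  moreover have "(\<lambda>t. (indicator A t *\<^sub>R u t) + (indicator A t *\<^sub>R w t)) = (\<lambda>t. indicator A t *\<^sub>R (u t + w t))"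
    by (auto simp: fun_eq_iff split: split_indicator)
  ultimately show ?thesis unfolding set_borel_measurable_def by simp
qed

lemma L2_lin:
  assumes u: "L2 u" and w: "L2 w"
  shows "L2 (\<lambda>t. p * u t + q * w t)"
  unfolding L2_def
proof
  show "set_borel_measurable lborel {0..1} (\<lambda>t. p * u t + q * w t)"
    by (intro sbm_add sbm_times[OF _ L2_meas[OF u]] sbm_times[OF _ L2_meas[OF w]]) simp_all
  have i1: "set_integrable lborel {0..1} (\<lambda>t. p^2 * (u t)^2)" using L2_sq[OF u] by simp
  have i2: "set_integrable lborel {0..1} (\<lambda>t. q^2 * (w t)^2)" using L2_sq[OF w] by simp
  have i3: "set_integrable lborel {0..1} (\<lambda>t. (2 * p * q) * u t * w t)"
    by (rule L2_int2_cont[OF u w]) simp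
  have "set_integrable lborel {0..1} (\<lambda>t. p^2 * (u t)^2 + q^2 * (w t)^2 + (2 * p * q) * u t * w t)"
    by (rule set_integral_add(1)[OF set_integral_add(1)[OF i1 i2] i3])
  moreover have "(p * x + q * y)^2 = p^2 * x^2 + q^2 * y^2 + (2 * p * q) * x * y" for x y :: real
    by (simp add: power2_eq_square algebra_simps)
  ultimately show "set_integrable lborel {0..1} (\<lambda>t. (p * u t + q * w t)^2)"
    by simp
qed

lemma step_bound: "m \<ge> 1 \<Longrightarrow> \<bar>(\<gamma>::nat \<Rightarrow> real) (idx m t)\<bar> \<le> (\<Sum>i<m. \<bar>\<gamma> i\<bar>)"
  by (rule member_le_sum) (auto simp: idx_lt)

lemma step_L2: "m \<ge> 1 \<Longrightarrow> L2 (\<lambda>t. (\<gamma>::nat \<Rightarrow> real) (idx m t))"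
  by (rule bounded_L2[OF step_meas step_bound])

context ctx begin

definition gA :: "(real \<Rightarrow> real) \<Rightarrow> nat \<Rightarrow> real" where
  "gA u i = 2 * real m ^ 2 * (\<Sum>j<m. a u j * kap i j)"

lemma A_step: "Qm m (Fderiv x0 (Qm m u)) s = gA u (idx m s)"
  unfolding A_formula gA_def ..

lemma nsq_int: "L2 v \<Longrightarrow> set_integrable lborel {0..1} (\<lambda>t. exp (- 2 * \<sigma> * t) * v t * v t)"
  by (rule L2_int2_cont) (auto intro!: continuous_intros)

lemma A_int:
  assumes v: "L2 v"
  shows "set_integrable lborel {0..1} (\<lambda>t. exp (- 2 * \<sigma> * t) * Qm m (Fderiv x0 (Qm m w)) t * v t)"
proof -
  have "set_integrable lborel {0..1} (\<lambda>t. (exp (- 2 * \<sigma> * t) * gA w (idx m t)) * v t)"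
  proof (rule L2_int[OF v])
    show "(\<lambda>t. exp (- 2 * \<sigma> * t) * gA w (idx m t)) \<in> borel_measurable borel" by measurable
    fix t :: real assume t: "t \<in> {0..1}"
    have "\<bar>exp (- 2 * \<sigma> * t) * gA w (idx m t)\<bar> = exp (- 2 * \<sigma> * t) * \<bar>gA w (idx m t)\<bar>" by (simp add: abs_mult)
    also have "\<dots> \<le> 1 * (\<Sum>i<m. \<bar>gA w i\<bar>)"
      by (intro mult_mono step_bound[OF m1]) (use t sig in auto)
    finally show "\<bar>exp (- 2 * \<sigma> * t) * gA w (idx m t)\<bar> \<le> (\<Sum>i<m. \<bar>gA w i\<bar>)" by simp
  qed
  then show ?thesis by (simp add: A_step)
qed

lemma inner_lin:
  assumes "set_integrable lborel {0..1} (\<lambda>t. exp (- 2 * \<sigma> * t) * x t * z t)"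
    and "set_integrable lborel {0..1} (\<lambda>t. exp (- 2 * \<sigma> * t) * y t * z t)"
  shows "inner_sigma \<sigma> (\<lambda>s. p * x s + q * y s) z = p * inner_sigma \<sigma> x z + q * inner_sigma \<sigma> y z"
proof -
  have "inner_sigma \<sigma> (\<lambda>s. p * x s + q * y s) z
      = (LBINT t:{0..1}. p * (exp (- 2 * \<sigma> * t) * x t * z t) + q * (exp (- 2 * \<sigma> * t) * y t * z t))"
    unfolding inner_sigma_def by (rule set_lebesgue_integral_cong) (auto simp: algebra_simps)
  also have "\<dots> = p * inner_sigma \<sigma> x z + q * inner_sigma \<sigma> y z"
    unfolding inner_sigma_def
    by (subst set_integral_add(2)) (use assms in auto)
  finally show ?thesis .
qed

lemma nsq_nonneg: "L2 v \<Longrightarrow> inner_sigma \<sigma> v v \<ge> 0"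
  by (simp add: normsq sum_nonneg N_nonneg)

definition cst :: real where "cst = 8 * \<sigma> * norm0 x0 / real m"

lemma accA:
  assumes hyp: "accretive \<sigma> (\<lambda>v. Qms \<sigma> m (Fderiv x0 (Qms \<sigma> m v)))"
    and v: "L2 v" and c: "c \<ge> cst"
  shows "inner_sigma \<sigma> (\<lambda>s. Qm m (Fderiv x0 (Qm m v)) s + c * v s) v \<ge> 0"
proof -
  have h: "inner_sigma \<sigma> (\<lambda>s. Qms \<sigma> m (Fderiv x0 (Qms \<sigma> m v)) s) v \<ge> 0"
    using hyp v unfolding accretive_def by auto
  have "inner_sigma \<sigma> (\<lambda>s. 1 * Qm m (Fderiv x0 (Qm m v)) s + c * v s) v
      = 1 * inner_sigma \<sigma> (\<lambda>s. Qm m (Fderiv x0 (Qm m v)) s) v + c * inner_sigma \<sigma> v v"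
    by (rule inner_lin[OF A_int[OF v] nsq_int[OF v]])
  moreover have "inner_sigma \<sigma> (\<lambda>s. Qm m (Fderiv x0 (Qm m v)) s) v \<ge> - cst * inner_sigma \<sigma> v v"
    using part1[OF v h] unfolding cst_def by simp
  moreover have "cst * inner_sigma \<sigma> v v \<le> c * inner_sigma \<sigma> v v"
    by (rule mult_right_mono[OF c nsq_nonneg[OF v]])
  ultimately show ?thesis by simp
qed

lemma Lc_pos: "Lc > 0"
proof -
  have "X 0 < X 1" by (rule DERIV_pos_imp_increasing[of 0 1 X]) (use X_deriv x0c_pos in auto)
  then show ?thesis unfolding Lc_def by simp
qed

lemma cst_pos: "cst > 0"
  unfolding cst_def using Lc_pos Lc_le sig mpos by auto

lemma a_lin:
  assumes u: "L2 u" and w: "L2 w" and j: "j < m"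
  shows "a (\<lambda>t. u t - w t) j = a u j - a w j"
proof -
  have iu: "set_integrable lborel (Dl m j) (\<lambda>t. 1 * u t)" by (rule L2_int_Dl[OF u _ j]) simp
  have iw: "set_integrable lborel (Dl m j) (\<lambda>t. 1 * w t)" by (rule L2_int_Dl[OF w _ j]) simp
  show ?thesis unfolding a_def using set_integral_diff(2)[OF iu iw] by simp
qed

lemma A_lin:
  assumes u: "L2 u" and w: "L2 w"
  shows "Qm m (Fderiv x0 (Qm m (\<lambda>t. u t - w t))) s = Qm m (Fderiv x0 (Qm m u)) s - Qm m (Fderiv x0 (Qm m w)) s"
  unfolding A_formula
  by (simp add: a_lin[OF u w] algebra_simps sum_subtractf)

end

context ctx begin

abbreviation Ao where "Ao u \<equiv> (\<lambda>s. Qm m (Fderiv x0 (Qm m u)) s)"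

lemma sqrt_bound:
  fixes x y c :: real
  assumes "x \<le> c^2 * y" "c \<ge> 0" "y \<ge> 0"
  shows "sqrt x \<le> c * sqrt y"
proof -
  have "sqrt x \<le> sqrt (c^2 * y)" using assms(1) by (rule real_sqrt_le_mono)
  also have "\<dots> = c * sqrt y" using assms(2) by (simp add: real_sqrt_mult)
  finally show ?thesis .
qed

lemma part3:
  assumes hyp: "accretive \<sigma> (\<lambda>v. Qms \<sigma> m (Fderiv x0 (Qms \<sigma> m v)))"
    and al: "\<alpha> \<ge> 2 * cst" and u: "L2 u" and v: "L2 v"
    and eq: "ae_eq01 (\<lambda>s. \<alpha> * u s + Ao u s) v"
  shows "norm_sigma \<sigma> u \<le> 2 / \<alpha> * norm_sigma \<sigma> v"
proof -
  have ap: "\<alpha> > 0" using al cst_pos by linarith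
  define U where "U = inner_sigma \<sigma> u u"
  define V where "V = inner_sigma \<sigma> v v"
  have U0: "U \<ge> 0" unfolding U_def by (rule nsq_nonneg[OF u])
  have V0: "V \<ge> 0" unfolding V_def by (rule nsq_nonneg[OF v])
  have iAu: "set_integrable lborel {0..1} (\<lambda>t. exp (- 2 * \<sigma> * t) * Ao u t * u t)" by (rule A_int[OF u])
  have iuu: "set_integrable lborel {0..1} (\<lambda>t. exp (- 2 * \<sigma> * t) * u t * u t)" by (rule nsq_int[OF u])
  have ivv: "set_integrable lborel {0..1} (\<lambda>t. exp (- 2 * \<sigma> * t) * v t * v t)" by (rule nsq_int[OF v])
  have ivu: "set_integrable lborel {0..1} (\<lambda>t. exp (- 2 * \<sigma> * t) * v t * u t)"
    by (rule L2_int2_cont[OF v u]) (intro continuous_intros)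
  have L1: "inner_sigma \<sigma> (\<lambda>s. \<alpha> * u s + 1 * Ao u s) u = \<alpha> * U + 1 * inner_sigma \<sigma> (Ao u) u"
    unfolding U_def by (rule inner_lin[OF iuu iAu])
  have L2': "inner_sigma \<sigma> (\<lambda>s. 1 * Ao u s + (\<alpha>/2) * u s) u = 1 * inner_sigma \<sigma> (Ao u) u + (\<alpha>/2) * U"
    unfolding U_def by (rule inner_lin[OF iAu iuu])
  have acc: "inner_sigma \<sigma> (\<lambda>s. Ao u s + (\<alpha>/2) * u s) u \<ge> 0"
    by (rule accA[OF hyp u]) (use al in simp)
  have lhs: "inner_sigma \<sigma> (\<lambda>s. \<alpha> * u s + Ao u s) u \<ge> (\<alpha>/2) * U"
  proof -
    have a1: "inner_sigma \<sigma> (\<lambda>s. \<alpha> * u s + Ao u s) u = \<alpha> * U + inner_sigma \<sigma> (Ao u) u" using L1 by simp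
    have a2: "0 \<le> inner_sigma \<sigma> (Ao u) u + \<alpha> * U / 2" using L2' acc by simp
    have a3: "(\<alpha>/2) * U = \<alpha> * U / 2" by simp
    show ?thesis using a1 a2 a3 by linarith
  qed
  have same: "inner_sigma \<sigma> (\<lambda>s. \<alpha> * u s + Ao u s) u = inner_sigma \<sigma> v u"
    unfolding inner_sigma_def
  proof (rule set_int_cong_AE')
    have "set_integrable lborel {0..1} (\<lambda>t. \<alpha> * (exp (- 2 * \<sigma> * t) * u t * u t) + exp (- 2 * \<sigma> * t) * Ao u t * u t)"
      using iuu iAu by (intro set_integral_add(1)) auto
    then have "set_borel_measurable lborel {0..1} (\<lambda>t. \<alpha> * (exp (- 2 * \<sigma> * t) * u t * u t) + exp (- 2 * \<sigma> * t) * Ao u t * u t)"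
      by (rule sint_meas)
    moreover have "(\<lambda>t. \<alpha> * (exp (- 2 * \<sigma> * t) * u t * u t) + exp (- 2 * \<sigma> * t) * Ao u t * u t)
        = (\<lambda>t. exp (- 2 * \<sigma> * t) * (\<alpha> * u t + Ao u t) * u t)"
      by (auto simp: fun_eq_iff algebra_simps)
    ultimately show "set_borel_measurable lborel {0..1} (\<lambda>t. exp (- 2 * \<sigma> * t) * (\<alpha> * u t + Ao u t) * u t)"
      by simp
    show "set_borel_measurable lborel {0..1} (\<lambda>t. exp (- 2 * \<sigma> * t) * v t * u t)" by (rule sint_meas[OF ivu])
    show "AE t in lborel. t \<in> {0..1} \<longrightarrow> exp (- 2 * \<sigma> * t) * (\<alpha> * u t + Ao u t) * u t = exp (- 2 * \<sigma> * t) * v t * u t"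
      using eq unfolding ae_eq01_def by (auto elim!: eventually_mono)
  qed
  have rhs: "inner_sigma \<sigma> v u \<le> (\<alpha>/4) * U + (1/\<alpha>) * V"
  proof -
    have "inner_sigma \<sigma> v u \<le> (LBINT t:{0..1}. (\<alpha>/4) * (exp (- 2 * \<sigma> * t) * u t * u t) + (1/\<alpha>) * (exp (- 2 * \<sigma> * t) * v t * v t))"
      unfolding inner_sigma_def
    proof (rule set_integral_mono[OF ivu])
      show "set_integrable lborel {0..1} (\<lambda>t. (\<alpha>/4) * (exp (- 2 * \<sigma> * t) * u t * u t) + (1/\<alpha>) * (exp (- 2 * \<sigma> * t) * v t * v t))"
        using iuu ivv by (intro set_integral_add(1)) auto
      fix t :: real
      have "0 \<le> (\<alpha> * u t / 2 - v t)^2" by simp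
      then have h: "\<alpha> * (v t * u t) \<le> (\<alpha> * u t / 2)^2 + (v t)^2"
        by (simp add: power2_diff algebra_simps)
      have h2: "(\<alpha> * u t / 2)^2 + (v t)^2 = \<alpha> * ((\<alpha>/4) * (u t * u t) + (1/\<alpha>) * (v t * v t))"
        using ap by (simp add: field_simps power2_eq_square)
      have "\<alpha> * (v t * u t) \<le> \<alpha> * ((\<alpha>/4) * (u t * u t) + (1/\<alpha>) * (v t * v t))" using h h2 by simp
      then have "v t * u t \<le> (\<alpha>/4) * (u t * u t) + (1/\<alpha>) * (v t * v t)" using ap by simp
      then have "exp (- 2 * \<sigma> * t) * (v t * u t) \<le> exp (- 2 * \<sigma> * t) * ((\<alpha>/4) * (u t * u t) + (1/\<alpha>) * (v t * v t))"
        by (rule mult_left_mono) simp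
      then show "exp (- 2 * \<sigma> * t) * v t * u t \<le> (\<alpha>/4) * (exp (- 2 * \<sigma> * t) * u t * u t) + (1/\<alpha>) * (exp (- 2 * \<sigma> * t) * v t * v t)"
        by (simp add: algebra_simps)
    qed
    also have "\<dots> = (\<alpha>/4) * U + (1/\<alpha>) * V"
      unfolding U_def V_def inner_sigma_def by (subst set_integral_add(2)) (use iuu ivv in auto)
    finally show ?thesis .
  qed
  have "(\<alpha>/2) * U \<le> (\<alpha>/4) * U + (1/\<alpha>) * V" using lhs same rhs by linarith
  moreover have "(\<alpha>/2) * U = (\<alpha>/4) * U + (\<alpha>/4) * U" by (simp add: algebra_simps)
  ultimately have "(\<alpha>/4) * U \<le> (1/\<alpha>) * V" by linarith
  then have "U \<le> (2/\<alpha>)^2 * V" using ap by (simp add: field_simps power2_eq_square)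
  then have "sqrt U \<le> (2/\<alpha>) * sqrt V" by (rule sqrt_bound) (use ap V0 in auto)
  then show ?thesis unfolding norm_sigma_def U_def V_def .
qed

end

context ctx begin

lemma part4:
  assumes hyp: "accretive \<sigma> (\<lambda>v. Qms \<sigma> m (Fderiv x0 (Qms \<sigma> m v)))"
    and al: "\<alpha> \<ge> 2 * cst" and u: "L2 u" and w: "L2 w"
    and eq: "ae_eq01 (\<lambda>s. \<alpha> * u s + Ao u s) (Ao w)"
  shows "norm_sigma \<sigma> u \<le> 2 * norm_sigma \<sigma> w"
proof -
  have ap: "\<alpha> > 0" using al cst_pos by linarith
  define d where "d t = u t - w t" for t
  have dL: "L2 d"
  proof -
    have "L2 (\<lambda>t. 1 * u t + (-1) * w t)" by (rule L2_lin[OF u w])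
    then show ?thesis unfolding d_def by simp
  qed
  have Ad: "Ao d s = Ao u s - Ao w s" for s unfolding d_def by (rule A_lin[OF u w])
  have acc: "inner_sigma \<sigma> (\<lambda>s. Ao d s + (\<alpha>/2) * d s) d \<ge> 0"
    by (rule accA[OF hyp dL]) (use al in simp)
  have iAd: "set_integrable lborel {0..1} (\<lambda>t. exp (- 2 * \<sigma> * t) * Ao d t * d t)" by (rule A_int[OF dL])
  have idd: "set_integrable lborel {0..1} (\<lambda>t. exp (- 2 * \<sigma> * t) * d t * d t)" by (rule nsq_int[OF dL])
  have iuu: "set_integrable lborel {0..1} (\<lambda>t. exp (- 2 * \<sigma> * t) * u t * u t)" by (rule nsq_int[OF u])
  have iww: "set_integrable lborel {0..1} (\<lambda>t. exp (- 2 * \<sigma> * t) * w t * w t)" by (rule nsq_int[OF w])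
  have "inner_sigma \<sigma> (\<lambda>s. Ao d s + (\<alpha>/2) * d s) d
      = (LBINT t:{0..1}. (\<alpha>/2) * (exp (- 2 * \<sigma> * t) * w t * w t) - (\<alpha>/2) * (exp (- 2 * \<sigma> * t) * u t * u t))"
    unfolding inner_sigma_def
  proof (rule set_int_cong_AE')
    have "set_integrable lborel {0..1} (\<lambda>t. exp (- 2 * \<sigma> * t) * Ao d t * d t + (\<alpha>/2) * (exp (- 2 * \<sigma> * t) * d t * d t))"
      using iAd idd by (intro set_integral_add(1)) auto
    then have "set_borel_measurable lborel {0..1} (\<lambda>t. exp (- 2 * \<sigma> * t) * Ao d t * d t + (\<alpha>/2) * (exp (- 2 * \<sigma> * t) * d t * d t))"
      by (rule sint_meas)
    moreover have "(\<lambda>t. exp (- 2 * \<sigma> * t) * Ao d t * d t + (\<alpha>/2) * (exp (- 2 * \<sigma> * t) * d t * d t))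
        = (\<lambda>t. exp (- 2 * \<sigma> * t) * (Ao d t + (\<alpha>/2) * d t) * d t)"
      by (auto simp: fun_eq_iff algebra_simps)
    ultimately show "set_borel_measurable lborel {0..1} (\<lambda>t. exp (- 2 * \<sigma> * t) * (Ao d t + (\<alpha>/2) * d t) * d t)"
      by simp
    have "set_integrable lborel {0..1} (\<lambda>t. (\<alpha>/2) * (exp (- 2 * \<sigma> * t) * w t * w t) - (\<alpha>/2) * (exp (- 2 * \<sigma> * t) * u t * u t))"
      using iww iuu by (intro set_integral_diff(1)) auto
    then show "set_borel_measurable lborel {0..1} (\<lambda>t. (\<alpha>/2) * (exp (- 2 * \<sigma> * t) * w t * w t) - (\<alpha>/2) * (exp (- 2 * \<sigma> * t) * u t * u t))"
      by (rule sint_meas)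
    show "AE t in lborel. t \<in> {0..1} \<longrightarrow> exp (- 2 * \<sigma> * t) * (Ao d t + (\<alpha>/2) * d t) * d t
        = (\<alpha>/2) * (exp (- 2 * \<sigma> * t) * w t * w t) - (\<alpha>/2) * (exp (- 2 * \<sigma> * t) * u t * u t)"
      using eq unfolding ae_eq01_def
    proof (elim eventually_mono, intro impI)
      fix t assume h: "t \<in> {0..1} \<longrightarrow> \<alpha> * u t + Ao u t = Ao w t" and t: "t \<in> {0..1}"
      then have e: "Ao d t = - \<alpha> * u t" using Ad[of t] h by simp
      show "exp (- 2 * \<sigma> * t) * (Ao d t + (\<alpha>/2) * d t) * d t
        = (\<alpha>/2) * (exp (- 2 * \<sigma> * t) * w t * w t) - (\<alpha>/2) * (exp (- 2 * \<sigma> * t) * u t * u t)"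
        unfolding e d_def by (simp add: field_simps)
    qed
  qed
  also have "\<dots> = (\<alpha>/2) * inner_sigma \<sigma> w w - (\<alpha>/2) * inner_sigma \<sigma> u u"
    unfolding inner_sigma_def by (subst set_integral_diff(2)) (use iww iuu in auto)
  finally have "0 \<le> (\<alpha>/2) * inner_sigma \<sigma> w w - (\<alpha>/2) * inner_sigma \<sigma> u u" using acc by simp
  then have "(\<alpha>/2) * inner_sigma \<sigma> u u \<le> (\<alpha>/2) * inner_sigma \<sigma> w w" by simp
  then have "inner_sigma \<sigma> u u \<le> inner_sigma \<sigma> w w" using ap by simp
  then have "norm_sigma \<sigma> u \<le> norm_sigma \<sigma> w" unfolding norm_sigma_def by (rule real_sqrt_le_mono)
  moreover have "norm_sigma \<sigma> w \<ge> 0" unfolding norm_sigma_def using nsq_nonneg[OF w] by simp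
  ultimately show ?thesis by linarith
qed

lemma part2b:
  assumes hyp: "accretive \<sigma> (\<lambda>v. Qms \<sigma> m (Fderiv x0 (Qms \<sigma> m v)))"
    and al: "\<alpha> \<ge> 2 * cst" and u: "L2 u"
    and eq: "ae_eq01 (\<lambda>s. \<alpha> * u s + Ao u s) (\<lambda>s. 0)"
  shows "ae_eq01 u (\<lambda>s. 0)"
proof -
  have z: "L2 (\<lambda>s::real. 0::real)" by (rule bounded_L2[where K=0]) auto
  have "norm_sigma \<sigma> u \<le> 2 / \<alpha> * norm_sigma \<sigma> (\<lambda>s. 0)" by (rule part3[OF hyp al u z eq])
  moreover have "norm_sigma \<sigma> (\<lambda>s. 0) = 0" by (simp add: norm_sigma_def inner_sigma_def)
  ultimately have "sqrt (inner_sigma \<sigma> u u) \<le> 0" unfolding norm_sigma_def by simp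
  then have U0: "inner_sigma \<sigma> u u = 0" using nsq_nonneg[OF u] by simp
  have iuu: "integrable lborel (\<lambda>t. indicator {0..1} t *\<^sub>R (exp (- 2 * \<sigma> * t) * u t * u t))"
    using nsq_int[OF u] unfolding set_integrable_def .
  have "(LINT t|lborel. indicator {0..1} t *\<^sub>R (exp (- 2 * \<sigma> * t) * u t * u t)) = 0"
    using U0 unfolding inner_sigma_def set_lebesgue_integral_def .
  then have "AE t in lborel. indicator {0..1} t *\<^sub>R (exp (- 2 * \<sigma> * t) * u t * u t) = 0"
    by (subst integral_nonneg_eq_0_iff_AE[OF iuu, symmetric]) (auto simp: indicator_def mult.assoc)
  then show ?thesis unfolding ae_eq01_def
    by (elim eventually_mono) (auto simp: indicator_def)
qed

end

context ctx begin

lemma idx_Dl: "i < m \<Longrightarrow> t \<in> Dl m i \<Longrightarrow> idx m t = i"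
proof -
  assume i: "i < m" and t: "t \<in> Dl m i"
  have "t \<in> {0..<1}" using Dl_sub[OF i] t by auto
  then show ?thesis using idx_char[OF m1, of t i] i t by (auto simp: Dl_def)
qed

lemma part2a:
  assumes al: "\<alpha> > 0" and v: "L2 v"
  shows "\<exists>u. L2 u \<and> ae_eq01 (\<lambda>s. \<alpha> * u s + Ao u s) v"
proof -
  define M where "M i j = (if i = j then \<alpha> else 0) + 2 * real m * kap i j" for i j
  have up: "M i j = 0" if "i < j" for i j using that kap_upper[OF that] by (simp add: M_def)
  have dg: "M i i \<noteq> 0" for i
  proof -
    have "M i i \<ge> \<alpha>" unfolding M_def using kap_nonneg[of i i] mpos by simp
    then show ?thesis using al by simp
  qed
  obtain y where y: "\<And>i. i < m \<Longrightarrow> (\<Sum>j<m. M i j * y j) = a v i"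
    using tri_solve[of M m "a v"] up dg by blast
  have yeq: "\<alpha> * y i + 2 * real m * (\<Sum>j<m. kap i j * y j) = a v i" if i: "i < m" for i
  proof -
    have "(\<Sum>j<m. M i j * y j) = (\<Sum>j<m. (if i = j then \<alpha> else 0) * y j) + (\<Sum>j<m. 2 * real m * (kap i j * y j))"
      unfolding M_def by (simp add: distrib_right sum.distrib mult.assoc)
    also have "(\<Sum>j<m. (if i = j then \<alpha> else 0) * y j) = (\<Sum>j\<in>{i}. (if i = j then \<alpha> else 0) * y j)"
      by (rule sum.mono_neutral_right) (use i in auto)
    also have "(\<Sum>j<m. 2 * real m * (kap i j * y j)) = 2 * real m * (\<Sum>j<m. kap i j * y j)"
      by (simp add: sum_distrib_left)
    also have "(\<Sum>j\<in>{i}. (if i = j then \<alpha> else 0) * y j) = \<alpha> * y i" by simp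
    finally show ?thesis using y[OF i] by simp
  qed
  define gP where "gP i = 2 * real m ^ 2 * (\<Sum>j<m. y j * kap i j)" for i
  define u where "u t = (1/\<alpha>) * v t + (- 1/\<alpha>) * gP (idx m t)" for t
  have uL: "L2 u" unfolding u_def by (rule L2_lin[OF v step_L2[OF m1]])
  have au: "a u i = y i" if i: "i < m" for i
  proof -
    have iv: "set_integrable lborel (Dl m i) (\<lambda>t. (1/\<alpha>) * v t)" by (rule L2_int_Dl[OF v _ i]) simp
    have ig: "set_integrable lborel (Dl m i) (\<lambda>t. (- 1/\<alpha>) * gP (idx m t))"
    proof -
      have "set_integrable lborel (Dl m i) (\<lambda>t. (- 1/\<alpha>) * gP i)" by (rule Dl_int) simp
      moreover have "set_integrable lborel (Dl m i) (\<lambda>t. (- 1/\<alpha>) * gP i) = set_integrable lborel (Dl m i) (\<lambda>t. (- 1/\<alpha>) * gP (idx m t))"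
        by (rule set_integrable_cong) (auto simp: idx_Dl[OF i])
      ultimately show ?thesis by simp
    qed
    have "a u i = (LBINT t:Dl m i. (1/\<alpha>) * v t) + (LBINT t:Dl m i. (- 1/\<alpha>) * gP (idx m t))"
      unfolding a_def u_def by (rule set_integral_add(2)[OF iv ig])
    also have "(LBINT t:Dl m i. (- 1/\<alpha>) * gP (idx m t)) = (LBINT t:Dl m i. (- 1/\<alpha>) * gP i)"
      by (rule set_lebesgue_integral_cong) (auto simp: idx_Dl[OF i])
    also have "\<dots> = (- 1/\<alpha>) * gP i / real m" by (rule Dl_measure_int[OF i])
    also have "(LBINT t:Dl m i. (1/\<alpha>) * v t) = (1/\<alpha>) * a v i" by (simp add: a_def)
    finally have au1: "a u i = (1/\<alpha>) * a v i + (- 1/\<alpha>) * gP i / real m" .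
    have gPm: "gP i / real m = 2 * real m * (\<Sum>j<m. kap i j * y j)"
      unfolding gP_def using mpos by (simp add: power2_eq_square mult_ac)
    have "a u i = (a v i - gP i / real m) / \<alpha>" using au1 al mpos by (simp add: field_simps)
    also have "\<dots> = (\<alpha> * y i) / \<alpha>"
    proof -
      have "a v i - 2 * real m * (\<Sum>j<m. kap i j * y j) = \<alpha> * y i" using yeq[OF i] by linarith
      then show ?thesis unfolding gPm by simp
    qed
    also have "\<dots> = y i" using al by simp
    finally show ?thesis .
  qed
  have Au: "Ao u s = gP (idx m s)" for s
    unfolding A_formula gP_def using au idx_lt[OF m1] by (simp add: mult.commute)
  have "\<alpha> * u s + Ao u s = v s" for s
    unfolding Au u_def using al by (simp add: algebra_simps)
  then have "ae_eq01 (\<lambda>s. \<alpha> * u s + Ao u s) v" unfolding ae_eq01_def by simp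
  then show ?thesis using uL by blast
qed

end

theorem corollary3p2:
  fixes x0 :: "real \<Rightarrow> real" and \<sigma> :: real and m :: nat
  assumes "W2inf x0"
    and "\<forall>t\<in>{0..1}. x0 t > 0" and "x0 0 > 0"
    and "\<sigma> > 0" and "real m \<ge> \<sigma>"
    and "accretive \<sigma> (\<lambda>v. Qms \<sigma> m (Fderiv x0 (Qms \<sigma> m v)))"
  shows "accretive \<sigma> (\<lambda>v s. Qm m (Fderiv x0 (Qm m v)) s + 8 * \<sigma> * norm0 x0 / real m * v s)
    \<and> (\<forall>\<alpha>. \<alpha> \<ge> 16 * \<sigma> * norm0 x0 / real m \<longrightarrow>
           (\<forall>v. L2 v \<longrightarrow> (\<exists>u. L2 u \<and> ae_eq01 (\<lambda>s. \<alpha> * u s + Qm m (Fderiv x0 (Qm m u)) s) v))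
         \<and> (\<forall>u. L2 u \<longrightarrow> ae_eq01 (\<lambda>s. \<alpha> * u s + Qm m (Fderiv x0 (Qm m u)) s) (\<lambda>s. 0)
                 \<longrightarrow> ae_eq01 u (\<lambda>s. 0))
         \<and> (\<forall>u v. L2 u \<longrightarrow> L2 v \<longrightarrow> ae_eq01 (\<lambda>s. \<alpha> * u s + Qm m (Fderiv x0 (Qm m u)) s) v
                 \<longrightarrow> norm_sigma \<sigma> u \<le> 2 / \<alpha> * norm_sigma \<sigma> v)
         \<and> (\<forall>u w. L2 u \<longrightarrow> L2 w \<longrightarrow>
                 ae_eq01 (\<lambda>s. \<alpha> * u s + Qm m (Fderiv x0 (Qm m u)) s) (Qm m (Fderiv x0 (Qm m w)))
                 \<longrightarrow> norm_sigma \<sigma> u \<le> 2 * norm_sigma \<sigma> w))"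
proof -
  have cont: "continuous_on {0..1} x0"
  proof -
    obtain d where d: "\<forall>t\<in>{0..1}. (x0 has_real_derivative d t) (at t within {0..1})"
      using assms(1) unfolding W2inf_def by blast
    then show ?thesis unfolding continuous_on_eq_continuous_within
      using DERIV_continuous by blast
  qed
  interpret C: ctx x0 \<sigma> m
    by unfold_locales (use cont assms(2,4,5) in auto)
  have cst: "C.cst = 8 * \<sigma> * norm0 x0 / real m" by (simp add: C.cst_def)
  have p1: "accretive \<sigma> (\<lambda>v s. Qm m (Fderiv x0 (Qm m v)) s + 8 * \<sigma> * norm0 x0 / real m * v s)"
    unfolding accretive_def
  proof (intro allI impI)
    fix v assume v: "L2 v"
    show "inner_sigma \<sigma> (\<lambda>s. Qm m (Fderiv x0 (Qm m v)) s + 8 * \<sigma> * norm0 x0 / real m * v s) v \<ge> 0"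
      using C.accA[OF assms(6) v, of "8 * \<sigma> * norm0 x0 / real m"] cst by simp
  qed
  have p2: "(\<forall>v. L2 v \<longrightarrow> (\<exists>u. L2 u \<and> ae_eq01 (\<lambda>s. \<alpha> * u s + Qm m (Fderiv x0 (Qm m u)) s) v))
         \<and> (\<forall>u. L2 u \<longrightarrow> ae_eq01 (\<lambda>s. \<alpha> * u s + Qm m (Fderiv x0 (Qm m u)) s) (\<lambda>s. 0)
                 \<longrightarrow> ae_eq01 u (\<lambda>s. 0))
         \<and> (\<forall>u v. L2 u \<longrightarrow> L2 v \<longrightarrow> ae_eq01 (\<lambda>s. \<alpha> * u s + Qm m (Fderiv x0 (Qm m u)) s) v
                 \<longrightarrow> norm_sigma \<sigma> u \<le> 2 / \<alpha> * norm_sigma \<sigma> v)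
         \<and> (\<forall>u w. L2 u \<longrightarrow> L2 w \<longrightarrow>
                 ae_eq01 (\<lambda>s. \<alpha> * u s + Qm m (Fderiv x0 (Qm m u)) s) (Qm m (Fderiv x0 (Qm m w)))
                 \<longrightarrow> norm_sigma \<sigma> u \<le> 2 * norm_sigma \<sigma> w)"
    if al: "\<alpha> \<ge> 16 * \<sigma> * norm0 x0 / real m" for \<alpha>
  proof -
    have al2: "\<alpha> \<ge> 2 * C.cst" using al cst by simp
    have ap: "\<alpha> > 0" using al2 C.cst_pos by linarith
    show ?thesis
      using C.part2a[OF ap] C.part2b[OF assms(6) al2] C.part3[OF assms(6) al2] C.part4[OF assms(6) al2]
      by blast
  qed
  show ?thesis using p1 p2 by blast
qed

end
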